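(* Let the setting and the algorithm RandProx-LC be as in the context, and suppose $\mu_f>0$, $0<\gamma<\frac{2}{L_f}$, $\tau>0$ and $\gamma\tau\big((1-\zeta)\|K\|^2+\omega_{\mathrm{ran}}\big)\le 1$. For $t\ge0$ let $$\Psi^t:=\frac{1}{\gamma}\|x^t-x^\star\|^2+\frac{1+\omega}{\tau}\|u_0^t-u_0^\star\|^2,$$ where $u_0^t:=P_{\mathrm{ran}(K)}(u^t)$ (the unique element of $\mathrm{ran}(K)$ with $v^t=K^*u_0^t$), $x^\star$ is the unique solution of the primal problem and $u_0^\star$ the unique solution in $\mathrm{ran}(K)$ of the dual problem. Then for every $t\ge0$, $\mathbb{E}[\Psi^t]\le c^t\Psi^0$, where $$c:=\max\left((1-\gamma\mu_f)^2,\ (\gamma L_f-1)^2,\ 1-\frac{\gamma\tau\lambda^+_{\min}(KK^* )}{1+\omega}\right)<1.$$ Moreover, $(x^t)$ and $(\hat{x}^t)$ both converge to $x^\star$ and $(u_0^t)$ converges to $u_0^\star$, almost surely.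
   Context: $\mathcal{X},\mathcal{U}$ are finite-dimensional real Hilbert spaces, $K:\mathcal{X}\to\mathcal{U}$ a nonzero linear operator with adjoint $K^*$, $P_{\mathrm{ran}(K)}$ the orthogonal projector onto the range of $K$, and $\lambda^+_{\min}(KK^* )>0$ the smallest nonzero eigenvalue of $KK^*$. $b\in\mathrm{ran}(K)$. $f:\mathcal{X}\to\mathbb{R}$ is convex, $L_f$-smooth ($\nabla f$ $L_f$-Lipschitz) and $\mu_f$-strongly convex ($f-\frac{\mu_f}{2}\|\cdot\|^2$ convex). Primal problem: minimize $f(x)$ subject to $Kx=b$. Dual problem: minimize $f^*(-K^*u)+\langle u,b\rangle$ over $u\in\mathcal{U}$. Algorithm RandProx-LC: inputs $x^0\in\mathcal{X}$, $u^0\in\mathcal{U}$, $\gamma>0$, $\tau>0$, $\omega\ge0$; $v^0:=K^*u^0$; for $t\ge0$: $\hat{x}^t:=x^t-\gamma\nabla f(x^t)-\gamma v^t$; $u^{t+1}:=u^t+\frac{\tau}{1+\omega}\mathcal{R}^t(K\hat{x}^t-b)$; $v^{t+1}:=K^*u^{t+1}$; $x^{t+1}:=\hat{x}^t-\gamma(1+\omega)(v^{t+1}-v^t)$. With $\mathcal{F}_t$ the $\sigma$-algebra generated by $(x^0,u^0),\dots,(x^t,u^t)$ and $r^t:=K\hat{x}^t-b$, the random estimate $\mathcal{R}^t(r^t)$ satisfies $\mathbb{E}[\mathcal{R}^t(r^t)\mid\mathcal{F}_t]=r^t$, $\mathbb{E}[\|\mathcal{R}^t(r^t)-r^t\|^2\mid\mathcal{F}_t]\le\omega\|r^t\|^2$,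 and $\mathbb{E}[\|K^*(\mathcal{R}^t(r^t)-r^t)\|^2\mid\mathcal{F}_t]\le\omega_{\mathrm{ran}}\|r^t\|^2-\zeta\|K^*r^t\|^2$, for constants $\omega_{\mathrm{ran}}\ge0$, $\zeta\in[0,1]$. *)

theory Defs
  imports "HOL-Analysis.Analysis" "HOL-Probability.Probability"
begin

definition fconj :: "('a::real_inner \<Rightarrow> real) \<Rightarrow> 'a \<Rightarrow> real" where
  "fconj f y = (SUP x. y \<bullet> x - f x)"

definition proj_ran :: "('a::real_inner \<Rightarrow> 'b::real_inner) \<Rightarrow> 'b \<Rightarrow> 'b" where
  "proj_ran K u = (THE v. v \<in> range K \<and> (\<forall>w\<in>range K. (u - v) \<bullet> w = 0))"

definition lambda_min_pos :: "('a::euclidean_space \<Rightarrow> 'b::euclidean_space) \<Rightarrow> real" where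
  "lambda_min_pos K =
     Inf {l. l \<noteq> 0 \<and> (\<exists>v. v \<noteq> 0 \<and> K (adjoint K v) = l *\<^sub>R v)}"

definition gen_filtr :: "'w measure \<Rightarrow> (nat \<Rightarrow> 'w \<Rightarrow> 'x::topological_space)
     \<Rightarrow> (nat \<Rightarrow> 'w \<Rightarrow> 'u::topological_space) \<Rightarrow> nat \<Rightarrow> 'w measure" where
  "gen_filtr M x u t = sigma (space M)
     {(\<lambda>s. (x i s, u i s)) -` B \<inter> space M | i B. i \<le> t \<and> B \<in> sets borel}"

end

theory Submission
  imports Defs
begin

lemma quad_zero:
  fixes A B :: real
  assumes h: "\<And>s. s * A \<le> s\<^sup>2 * B"
  shows "A = 0"
proof (rule ccontr)
  assume nz: "A \<noteq> 0"
  define s where "s = A / (2 * (\<bar>B\<bar> + 1))"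
  have pos: "2 * (\<bar>B\<bar> + 1) > 0" by simp
  have As: "A = s * (2 * (\<bar>B\<bar> + 1))" using pos by (simp add: s_def)
  have sn: "s \<noteq> 0" using nz As by auto
  have "s * s * (2 * (\<bar>B\<bar> + 1)) \<le> s * s * B" using h[of s] As
    by (simp add: power2_eq_square mult.assoc)
  moreover have "s * s > 0" using sn by (auto simp: zero_less_mult_iff linorder_neq_iff)
  ultimately have "2 * (\<bar>B\<bar> + 1) \<le> B" using mult_le_cancel_left_pos by blast
  then show False by (cases "B \<ge> 0") auto
qed

lemma nsq_add: "(norm (a + b))\<^sup>2 = (norm a)\<^sup>2 + 2 * (a \<bullet> b) + (norm (b::'a::real_inner))\<^sup>2"
  by (simp add: power2_norm_eq_inner inner_add_left inner_add_right inner_commute)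

lemma nsq_diff: "(norm (a - b))\<^sup>2 = (norm a)\<^sup>2 - 2 * (a \<bullet> b) + (norm (b::'a::real_inner))\<^sup>2"
  by (simp add: power2_norm_eq_inner inner_diff_left inner_diff_right inner_commute)

lemma nsq_scale: "(norm (c *\<^sub>R a))\<^sup>2 = c\<^sup>2 * (norm (a::'a::real_normed_vector))\<^sup>2"
  by (simp add: power_mult_distrib)

lemma range_subspace: "linear K \<Longrightarrow> subspace (range K)"
  by (metis linear_subspace_image subspace_UNIV)

lemma proj_ex:
  fixes K :: "'a::euclidean_space \<Rightarrow> 'b::euclidean_space"
  assumes "linear K"
  shows "\<exists>v. v \<in> range K \<and> (\<forall>w\<in>range K. (u - v) \<bullet> w = 0)"
proof -
  obtain y z where y: "y \<in> span (range K)" and z: "\<And>w. w \<in> span (range K) \<Longrightarrow> orthogonal z w"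
    and e: "u = y + z"
    using orthogonal_subspace_decomp_exists by blast
  have sp: "span (range K) = range K" using range_subspace[OF assms] span_eq_iff by blast
  show ?thesis
    using y z e sp by (intro exI[of _ y]) (auto simp: orthogonal_def)
qed

lemma proj_uniq:
  fixes K :: "'a::euclidean_space \<Rightarrow> 'b::euclidean_space"
  assumes "linear K"
    and "v1 \<in> range K" "\<forall>w\<in>range K. (u - v1) \<bullet> w = 0"
    and "v2 \<in> range K" "\<forall>w\<in>range K. (u - v2) \<bullet> w = 0"
  shows "v1 = v2"
proof -
  have "v1 - v2 \<in> range K"
    using assms range_subspace[OF assms(1)] by (simp add: subspace_diff)
  then have "(u - v2) \<bullet> (v1 - v2) - (u - v1) \<bullet> (v1 - v2) = 0" using assms by auto
  then have "(v1 - v2) \<bullet> (v1 - v2) = 0" by (simp add: inner_diff_left inner_diff_right inner_commute)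
  then show ?thesis by simp
qed

lemma proj_char:
  fixes K :: "'a::euclidean_space \<Rightarrow> 'b::euclidean_space"
  assumes "linear K"
  shows "proj_ran K u \<in> range K \<and> (\<forall>w\<in>range K. (u - proj_ran K u) \<bullet> w = 0)"
proof -
  have "\<exists>!v. v \<in> range K \<and> (\<forall>w\<in>range K. (u - v) \<bullet> w = 0)"
    using proj_ex[OF assms] proj_uniq[OF assms] by blast
  then show ?thesis unfolding proj_ran_def by (rule theI')
qed

lemma proj_eqI:
  fixes K :: "'a::euclidean_space \<Rightarrow> 'b::euclidean_space"
  assumes "linear K" "v \<in> range K" "\<forall>w\<in>range K. (u - v) \<bullet> w = 0"
  shows "proj_ran K u = v"
  using proj_uniq[OF assms(1) _ _ assms(2,3)] proj_char[OF assms(1)] by blast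

lemma proj_id:
  fixes K :: "'a::euclidean_space \<Rightarrow> 'b::euclidean_space"
  assumes "linear K" "v \<in> range K"
  shows "proj_ran K v = v"
  using proj_eqI[OF assms] by simp

lemma proj_linear:
  fixes K :: "'a::euclidean_space \<Rightarrow> 'b::euclidean_space"
  assumes lin: "linear K"
  shows "linear (proj_ran K)"
proof (rule linearI)
  fix a b :: 'b and c :: real
  have S: "subspace (range K)" by (rule range_subspace[OF lin])
  have pa: "proj_ran K a \<in> range K" "\<forall>w\<in>range K. (a - proj_ran K a) \<bullet> w = 0"
    using proj_char[OF lin] by blast+
  have pb: "proj_ran K b \<in> range K" "\<forall>w\<in>range K. (b - proj_ran K b) \<bullet> w = 0"
    using proj_char[OF lin] by blast+
  show "proj_ran K (a + b) = proj_ran K a + proj_ran K b"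
  proof (rule proj_eqI[OF lin])
    show "proj_ran K a + proj_ran K b \<in> range K" using pa pb S by (simp add: subspace_add)
    show "\<forall>w\<in>range K. (a + b - (proj_ran K a + proj_ran K b)) \<bullet> w = 0"
    proof
      fix w assume "w \<in> range K"
      then have "(a - proj_ran K a) \<bullet> w + (b - proj_ran K b) \<bullet> w = 0" using pa pb by auto
      then show "(a + b - (proj_ran K a + proj_ran K b)) \<bullet> w = 0"
        by (simp add: algebra_simps inner_add_left inner_diff_left)
    qed
  qed
  show "proj_ran K (c *\<^sub>R a) = c *\<^sub>R proj_ran K a"
  proof (rule proj_eqI[OF lin])
    show "c *\<^sub>R proj_ran K a \<in> range K" using pa S by (simp add: subspace_scale)
    show "\<forall>w\<in>range K. (c *\<^sub>R a - c *\<^sub>R proj_ran K a) \<bullet> w = 0"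
    proof
      fix w assume "w \<in> range K"
      then have "(a - proj_ran K a) \<bullet> w = 0" using pa by auto
      then show "(c *\<^sub>R a - c *\<^sub>R proj_ran K a) \<bullet> w = 0"
        by (metis inner_scaleR_left mult_zero_right scaleR_right_diff_distrib)
    qed
  qed
qed

lemma adj_proj:
  fixes K :: "'a::euclidean_space \<Rightarrow> 'b::euclidean_space"
  assumes lin: "linear K"
  shows "adjoint K (proj_ran K u) = adjoint K u"
proof -
  have o: "\<forall>w\<in>range K. (u - proj_ran K u) \<bullet> w = 0" using proj_char[OF lin] by blast
  have "adjoint K (u - proj_ran K u) = 0"
  proof -
    have "\<And>x. x \<bullet> adjoint K (u - proj_ran K u) = 0"
      using o by (simp add: adjoint_works[OF lin] inner_commute)
    then show ?thesis by (metis inner_eq_zero_iff)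
  qed
  then show ?thesis using linear_diff[OF adjoint_linear[OF lin]] by (metis eq_iff_diff_eq_0)
qed

lemma continuous_linear_fun:
  fixes g :: "'a::euclidean_space \<Rightarrow> 'b::euclidean_space"
  assumes "linear g" shows "continuous_on UNIV g"
  using assms by (simp add: linear_continuous_on linear_linear)

lemma eig:
  fixes K :: "'a::euclidean_space \<Rightarrow> 'b::euclidean_space"
  assumes lin: "linear K" and nz: "K \<noteq> (\<lambda>_. 0)"
  shows "\<exists>m>0. (\<forall>v\<in>range K. m * (norm v)\<^sup>2 \<le> (norm (adjoint K v))\<^sup>2) \<and> lambda_min_pos K = m"
proof -
  let ?A = "adjoint K"
  have linA: "linear ?A" by (rule adjoint_linear[OF lin])
  have S: "subspace (range K)" by (rule range_subspace[OF lin])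
  define C where "C = range K \<inter> sphere 0 1"
  have cC: "compact C" unfolding C_def
    by (simp add: closed_subspace[OF S] compact_Int_closed[of "sphere 0 1" "range K", simplified Int_commute] Int_commute)
  obtain x0 where x0: "K x0 \<noteq> 0" using nz by auto
  have "K ((1 / norm (K x0)) *\<^sub>R x0) \<in> C"
    unfolding C_def using x0 by (simp add: linear_scale[OF lin] del: image_iff) (simp add: linear_scale[OF lin, symmetric])
  then have neC: "C \<noteq> {}" by auto
  have contf: "continuous_on C (\<lambda>v. (norm (?A v))\<^sup>2)"
    by (intro continuous_intros continuous_on_subset[OF continuous_linear_fun[OF linA]]) auto
  obtain v0 where v0C: "v0 \<in> C" and v0min: "\<And>y. y \<in> C \<Longrightarrow> (norm (?A v0))\<^sup>2 \<le> (norm (?A y))\<^sup>2"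
    using continuous_attains_inf[OF cC neC contf] by blast
  define m where "m = (norm (?A v0))\<^sup>2"
  have v0r: "v0 \<in> range K" and v0n: "norm v0 = 1" using v0C by (auto simp: C_def)
  have bound: "m * (norm v)\<^sup>2 \<le> (norm (?A v))\<^sup>2" if "v \<in> range K" for v
  proof (cases "v = 0")
    case True then show ?thesis by (simp add: linear_0[OF linA])
  next
    case False
    have "(1 / norm v) *\<^sub>R v \<in> C" using that False S by (simp add: C_def subspace_scale)
    then have "m \<le> (norm (?A ((1 / norm v) *\<^sub>R v)))\<^sup>2" using v0min m_def by blast
    also have "\<dots> = (norm (?A v))\<^sup>2 / (norm v)\<^sup>2"
      by (simp add: linear_scale[OF linA] power_divide)
    finally show ?thesis using False by (simp add: field_simps)
  qed
  obtain y0 where y0: "v0 = K y0" using v0r by auto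
  have mpos: "m > 0"
  proof (rule ccontr)
    assume "\<not> m > 0"
    then have "?A v0 = 0" by (simp add: m_def)
    then have "K y0 \<bullet> v0 = 0" by (metis adjoint_works[OF lin] inner_zero_right)
    then show False using y0 v0n by simp
  qed
  have eigv: "K (?A v0) = m *\<^sub>R v0"
  proof -
    have orth: "(K (?A v0) - m *\<^sub>R v0) \<bullet> h = 0" if hr: "h \<in> range K" for h
    proof -
      have key: "s * (2 * (m * (v0 \<bullet> h) - ?A v0 \<bullet> ?A h)) \<le> s\<^sup>2 * ((norm (?A h))\<^sup>2 - m * (norm h)\<^sup>2)" for s
      proof -
        have "v0 + s *\<^sub>R h \<in> range K" using hr v0r S by (simp add: subspace_add subspace_scale)
        then have "m * (norm (v0 + s *\<^sub>R h))\<^sup>2 \<le> (norm (?A (v0 + s *\<^sub>R h)))\<^sup>2" by (rule bound)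
        moreover have "(norm (v0 + s *\<^sub>R h))\<^sup>2 = 1 + 2 * s * (v0 \<bullet> h) + s\<^sup>2 * (norm h)\<^sup>2"
          using v0n by (simp add: nsq_add power_mult_distrib)
        moreover have "(norm (?A (v0 + s *\<^sub>R h)))\<^sup>2 = m + 2 * s * (?A v0 \<bullet> ?A h) + s\<^sup>2 * (norm (?A h))\<^sup>2"
          by (simp add: m_def linear_add[OF linA] linear_scale[OF linA] nsq_add power_mult_distrib)
        ultimately show ?thesis by (simp add: algebra_simps power2_eq_square)
      qed
      have "2 * (m * (v0 \<bullet> h) - ?A v0 \<bullet> ?A h) = 0" by (rule quad_zero[OF key])
      moreover have "?A v0 \<bullet> ?A h = K (?A v0) \<bullet> h"
        by (simp add: adjoint_works[OF lin])
      ultimately show ?thesis by (simp add: inner_diff_left)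
    qed
    have "K (?A v0) - m *\<^sub>R v0 \<in> range K" using v0r S by (simp add: subspace_diff subspace_scale)
    from orth[OF this] show ?thesis by simp
  qed
  have inE: "m \<in> {l. l \<noteq> 0 \<and> (\<exists>v. v \<noteq> 0 \<and> K (?A v) = l *\<^sub>R v)}"
    using mpos eigv v0n by (auto intro!: exI[of _ v0])
  have geE: "m \<le> l" if "l \<in> {l. l \<noteq> 0 \<and> (\<exists>v. v \<noteq> 0 \<and> K (?A v) = l *\<^sub>R v)}" for l
  proof -
    from that obtain v where l0: "l \<noteq> 0" and vnz: "v \<noteq> 0" and ev: "K (?A v) = l *\<^sub>R v" by auto
    have "v = K ((1 / l) *\<^sub>R ?A v)" using ev l0 by (simp add: linear_scale[OF lin])
    then have vr: "v \<in> range K" by (metis rangeI)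
    have "l * (norm v)\<^sup>2 = K (?A v) \<bullet> v" using ev by (simp add: power2_norm_eq_inner)
    also have "\<dots> = (norm (?A v))\<^sup>2" by (simp add: adjoint_works[OF lin, symmetric] power2_norm_eq_inner)
    finally have "m * (norm v)\<^sup>2 \<le> l * (norm v)\<^sup>2" using bound[OF vr] by simp
    then show ?thesis using vnz by simp
  qed
  have "lambda_min_pos K = m" unfolding lambda_min_pos_def
    by (rule cInf_eq_minimum[OF inE geE])
  then show ?thesis using mpos bound by blast
qed

lemma adj_norm:
  fixes K :: "'a::euclidean_space \<Rightarrow> 'b::euclidean_space"
  assumes lin: "linear K"
  shows "(norm (adjoint K r))\<^sup>2 \<le> (onorm K)\<^sup>2 * (norm r)\<^sup>2"
proof -
  have bl: "bounded_linear K" using lin by (simp add: linear_linear)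
  have "(norm (adjoint K r))\<^sup>2 = K (adjoint K r) \<bullet> r"
    by (simp add: adjoint_works[OF lin, symmetric] power2_norm_eq_inner)
  also have "\<dots> \<le> norm (K (adjoint K r)) * norm r" by (rule norm_cauchy_schwarz)
  also have "\<dots> \<le> onorm K * norm (adjoint K r) * norm r"
    by (intro mult_right_mono onorm[OF bl]) auto
  finally have h: "(norm (adjoint K r))\<^sup>2 \<le> onorm K * norm (adjoint K r) * norm r" .
  have on: "onorm K \<ge> 0" using onorm_pos_le[OF bl] .
  show ?thesis
  proof (cases "adjoint K r = 0")
    case True then show ?thesis by simp
  next
    case False
    then have "norm (adjoint K r) \<le> onorm K * norm r" using h
      by (simp add: power2_eq_square mult.assoc)
    then show ?thesis using on by (metis norm_ge_zero power_mono norm_mult abs_of_nonneg power_mult_distrib)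
  qed
qed

lemma cocoer:
  fixes h :: "'a::real_inner \<Rightarrow> real" and gh :: "'a \<Rightarrow> 'a"
  assumes L: "L > 0"
    and lower: "\<And>x y. h x + gh x \<bullet> (y - x) \<le> h y"
    and upper: "\<And>x y. h y \<le> h x + gh x \<bullet> (y - x) + L / 2 * (norm (y - x))\<^sup>2"
  shows "(norm (gh x - gh y))\<^sup>2 \<le> L * ((gh x - gh y) \<bullet> (x - y))"
proof -
  have half: "h a - gh a \<bullet> a \<le> h b - gh a \<bullet> b - 1 / (2 * L) * (norm (gh b - gh a))\<^sup>2" for a b
  proof -
    define D where "D = gh b - gh a"
    define z where "z = b - (1 / L) *\<^sub>R D"
    have 1: "h a + gh a \<bullet> (z - a) \<le> h z" by (rule lower)
    have 2: "h z \<le> h b + gh b \<bullet> (z - b) + L / 2 * (norm (z - b))\<^sup>2" by (rule upper)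
    have zb: "z - b = - ((1 / L) *\<^sub>R D)" by (simp add: z_def)
    have n: "(norm (z - b))\<^sup>2 = (1 / L)\<^sup>2 * (norm D)\<^sup>2" unfolding zb norm_minus_cancel by (rule nsq_scale)
    have n': "L / 2 * (norm (z - b))\<^sup>2 = L / 2 * ((1 / L)\<^sup>2 * (norm D)\<^sup>2)" using n by simp
    have i1: "gh b \<bullet> (z - b) = - (1 / L) * (gh b \<bullet> D)" by (simp add: zb)
    have i2: "gh a \<bullet> (z - a) = gh a \<bullet> z - gh a \<bullet> a" by (simp add: inner_diff_right)
    have i3: "gh a \<bullet> z = gh a \<bullet> b - (1 / L) * (gh a \<bullet> D)" by (simp add: z_def inner_diff_right)
    have i4: "gh b \<bullet> D - gh a \<bullet> D = (norm D)\<^sup>2" by (simp add: D_def power2_norm_eq_inner inner_diff_left)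
    have X: "h a - gh a \<bullet> a \<le> h b - gh a \<bullet> b + ((1 / L) * (gh a \<bullet> D) - (1 / L) * (gh b \<bullet> D)) + L / 2 * ((1 / L)\<^sup>2 * (norm D)\<^sup>2)"
      using 1 2 i1 i2 i3 n' by linarith
    have Y: "(1 / L) * (gh a \<bullet> D) - (1 / L) * (gh b \<bullet> D) = - (1 / L) * (norm D)\<^sup>2"
      using i4 by (simp add: algebra_simps)
    have Z: "L / 2 * ((1 / L)\<^sup>2 * (norm D)\<^sup>2) = 1 / (2 * L) * (norm D)\<^sup>2"
      using L by (simp add: power2_eq_square field_simps)
    have W: "- (1 / L) * (norm D)\<^sup>2 + 1 / (2 * L) * (norm D)\<^sup>2 = - (1 / (2 * L)) * (norm D)\<^sup>2"
      using L by (simp add: field_simps)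
    from X Y Z W have "h a - gh a \<bullet> a \<le> h b - gh a \<bullet> b - 1 / (2 * L) * (norm D)\<^sup>2" by linarith
    then show ?thesis by (simp only: D_def)
  qed
  have s1: "h x - gh x \<bullet> x \<le> h y - gh x \<bullet> y - 1 / (2 * L) * (norm (gh x - gh y))\<^sup>2"
    using half[of x y] by (simp add: norm_minus_commute)
  have s2: "h y - gh y \<bullet> y \<le> h x - gh y \<bullet> x - 1 / (2 * L) * (norm (gh x - gh y))\<^sup>2"
    using half[of y x] by simp
  have e: "(gh x - gh y) \<bullet> (x - y) = gh x \<bullet> x + gh y \<bullet> y - gh x \<bullet> y - gh y \<bullet> x"
    by (simp add: inner_diff_left inner_diff_right inner_commute)
  have "1 / L * (norm (gh x - gh y))\<^sup>2 \<le> (gh x - gh y) \<bullet> (x - y)"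
    using s1 s2 e by (simp add: field_simps)
  then show ?thesis using L by (simp add: field_simps)
qed

context
  fixes f :: "'x::euclidean_space \<Rightarrow> real" and gf :: "'x \<Rightarrow> 'x" and L mu :: real
  assumes f_grad: "\<And>y. (f has_derivative (\<lambda>h. gf y \<bullet> h)) (at y)"
    and f_smooth: "\<And>y z. norm (gf y - gf z) \<le> L * norm (y - z)"
    and f_strong: "convex_on UNIV (\<lambda>y. f y - mu / 2 * (norm y)\<^sup>2)"
    and mu_pos: "mu > 0"
begin

lemma line_deriv:
  "((\<lambda>s. f (x + s *\<^sub>R d)) has_real_derivative (gf (x + s *\<^sub>R d) \<bullet> d)) (at s)"
proof -
  have 1: "((\<lambda>s. x + s *\<^sub>R d) has_derivative (\<lambda>h. h *\<^sub>R d)) (at s)"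
    by (auto intro!: derivative_eq_intros)
  have "((\<lambda>s. f (x + s *\<^sub>R d)) has_derivative (\<lambda>h. gf (x + s *\<^sub>R d) \<bullet> (h *\<^sub>R d))) (at s)"
    by (rule has_derivative_compose[OF 1 f_grad])
  moreover have "(\<lambda>h. gf (x + s *\<^sub>R d) \<bullet> (h *\<^sub>R d)) = (*) (gf (x + s *\<^sub>R d) \<bullet> d)"
    by (auto simp: mult.commute)
  ultimately show ?thesis by (simp add: has_field_derivative_def)
qed

lemma descent: "f y \<le> f x + gf x \<bullet> (y - x) + L / 2 * (norm (y - x))\<^sup>2"
proof -
  define d where "d = y - x"
  define \<psi> where "\<psi> = (\<lambda>s. f (x + s *\<^sub>R d) - s * (gf x \<bullet> d) - L / 2 * s\<^sup>2 * (norm d)\<^sup>2)"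
  have "\<psi> 1 \<le> \<psi> 0"
  proof (rule DERIV_nonpos_imp_nonincreasing[of 0 1])
    fix s :: real assume s: "0 \<le> s" "s \<le> 1"
    have der: "(\<psi> has_real_derivative (gf (x + s *\<^sub>R d) \<bullet> d - gf x \<bullet> d - L * s * (norm d)\<^sup>2)) (at s)"
      unfolding \<psi>_def by (auto intro!: derivative_eq_intros line_deriv)
    have "gf (x + s *\<^sub>R d) \<bullet> d - gf x \<bullet> d = (gf (x + s *\<^sub>R d) - gf x) \<bullet> d" by (simp add: inner_diff_left)
    also have "\<dots> \<le> norm (gf (x + s *\<^sub>R d) - gf x) * norm d" by (rule norm_cauchy_schwarz)
    also have "\<dots> \<le> L * norm (s *\<^sub>R d) * norm d"
      by (intro mult_right_mono) (use f_smooth[of "x + s *\<^sub>R d" x] in auto)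
    also have "\<dots> = L * s * (norm d)\<^sup>2" using s by (simp add: power2_eq_square)
    finally show "\<exists>y. (\<psi> has_real_derivative y) (at s) \<and> y \<le> 0" using der by (intro exI[of _ "gf (x + s *\<^sub>R d) \<bullet> d - gf x \<bullet> d - L * s * (norm d)\<^sup>2"]) auto
  qed simp
  then show ?thesis by (simp add: \<psi>_def d_def)
qed

lemma strong_lower: "f x + gf x \<bullet> (y - x) + mu / 2 * (norm (y - x))\<^sup>2 \<le> f y"
proof -
  define d where "d = y - x"
  define h where "h = (\<lambda>y. f y - mu / 2 * (norm y)\<^sup>2)"
  define \<phi> where "\<phi> = (\<lambda>s. h (x + s *\<^sub>R d))"
  have cvx: "convex_on UNIV \<phi>"
    unfolding convex_on_def
  proof (intro conjI ballI allI impI)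
    show "convex (UNIV :: real set)" by simp
    fix a b :: real and u v :: real assume uv: "u \<ge> 0" "v \<ge> 0" "u + v = 1"
    have eq: "x + (u *\<^sub>R a + v *\<^sub>R b) *\<^sub>R d = u *\<^sub>R (x + a *\<^sub>R d) + v *\<^sub>R (x + b *\<^sub>R d)"
    proof -
      have "x = (u + v) *\<^sub>R x" using uv by simp
      then show ?thesis by (simp add: algebra_simps)
    qed
    show "\<phi> (u *\<^sub>R a + v *\<^sub>R b) \<le> u * \<phi> a + v * \<phi> b"
      unfolding \<phi>_def eq using f_strong uv unfolding convex_on_def h_def by auto
  qed
  have phi_eq: "\<phi> = (\<lambda>s. f (x + s *\<^sub>R d) - mu / 2 * ((norm x)\<^sup>2 + 2 * s * (x \<bullet> d) + s\<^sup>2 * (norm d)\<^sup>2))"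
    by (auto simp: \<phi>_def h_def nsq_add power_mult_distrib)
  have der: "(\<phi> has_real_derivative (gf x \<bullet> d - mu * (x \<bullet> d))) (at 0)"
  proof -
    have "(\<phi> has_real_derivative (gf (x + 0 *\<^sub>R d) \<bullet> d - mu / 2 * (2 * (x \<bullet> d) + 2 * 0 * (norm d)\<^sup>2))) (at 0)"
      unfolding phi_eq by (auto intro!: derivative_eq_intros line_deriv)
    then show ?thesis by (simp add: algebra_simps)
  qed
  have "\<phi> 1 - \<phi> 0 \<ge> (gf x \<bullet> d - mu * (x \<bullet> d)) * (1 - 0)"
    by (rule convex_on_imp_above_tangent[OF cvx]) (auto simp: der)
  then have "f x + gf x \<bullet> d + mu / 2 * (norm d)\<^sup>2 \<le> f (x + d)"
    by (simp add: \<phi>_def h_def nsq_add algebra_simps) (simp add: field_simps)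
  moreover have "x + d = y" by (simp add: d_def)
  ultimately show ?thesis by (simp add: d_def)
qed

lemma mu_le_L: "mu \<le> L"
proof -
  obtain e :: 'x where e: "e \<noteq> 0" using nonzero_Basis SOME_Basis by blast
  have 1: "f 0 + gf 0 \<bullet> (e - 0) + mu / 2 * (norm (e - 0))\<^sup>2 \<le> f e" by (rule strong_lower)
  have 2: "f e \<le> f 0 + gf 0 \<bullet> (e - 0) + L / 2 * (norm (e - 0))\<^sup>2" by (rule descent)
  from 1 2 have "mu / 2 * (norm e)\<^sup>2 \<le> L / 2 * (norm e)\<^sup>2" by simp
  moreover have "(norm e)\<^sup>2 > 0" using e by simp
  ultimately show ?thesis by simp
qed

lemma nesterov:
  "(norm (gf x - gf y))\<^sup>2 + mu * L * (norm (x - y))\<^sup>2 \<le> (L + mu) * ((gf x - gf y) \<bullet> (x - y))"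
proof -
  define h where "h = (\<lambda>y. f y - mu / 2 * (norm y)\<^sup>2)"
  define gh where "gh = (\<lambda>y. gf y - mu *\<^sub>R y)"
  have hexp: "h b - h a - gh a \<bullet> (b - a) = f b - f a - gf a \<bullet> (b - a) - mu / 2 * (norm (b - a))\<^sup>2" for a b
  proof -
    have "b = a + (b - a)" by simp
    then have "(norm b)\<^sup>2 = (norm a)\<^sup>2 + 2 * (a \<bullet> (b - a)) + (norm (b - a))\<^sup>2"
      by (metis nsq_add)
    then have e2: "(norm b)\<^sup>2 - (norm a)\<^sup>2 = 2 * (a \<bullet> (b - a)) + (norm (b - a))\<^sup>2" by linarith
    have e1: "h b - h a - gh a \<bullet> (b - a) = f b - f a - gf a \<bullet> (b - a) - mu / 2 * ((norm b)\<^sup>2 - (norm a)\<^sup>2) + mu * (a \<bullet> (b - a))"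
      by (simp add: h_def gh_def inner_diff_left algebra_simps)
    show ?thesis unfolding e1 e2 by (simp add: algebra_simps)
  qed
  have lower: "h a + gh a \<bullet> (b - a) \<le> h b" for a b
    using hexp[of b a] strong_lower[of a b] by linarith
  have mono: "0 \<le> (gh x - gh y) \<bullet> (x - y)"
  proof -
    have "h x + gh x \<bullet> (y - x) \<le> h y" "h y + gh y \<bullet> (x - y) \<le> h x" by (rule lower)+
    moreover have "gh x \<bullet> (y - x) = - (gh x \<bullet> (x - y))" by (simp add: inner_diff_right)
    ultimately show ?thesis by (simp add: inner_diff_left)
  qed
  have co: "(norm (gh x - gh y))\<^sup>2 \<le> (L - mu + e) * ((gh x - gh y) \<bullet> (x - y))" if e: "e > 0" for e
  proof (rule cocoer)
    show "L - mu + e > 0" using mu_le_L e by simp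
    show "h a + gh a \<bullet> (b - a) \<le> h b" for a b by (rule lower)
    show "h b \<le> h a + gh a \<bullet> (b - a) + (L - mu + e) / 2 * (norm (b - a))\<^sup>2" for a b
    proof -
      have "h b - h a - gh a \<bullet> (b - a) \<le> (L - mu) / 2 * (norm (b - a))\<^sup>2"
        using hexp[of b a] descent[of b a] by (simp add: algebra_simps)
      moreover have "(L - mu) / 2 * (norm (b - a))\<^sup>2 \<le> (L - mu + e) / 2 * (norm (b - a))\<^sup>2"
        using e by (intro mult_right_mono) auto
      ultimately show ?thesis by linarith
    qed
  qed
  define P where "P = (gh x - gh y) \<bullet> (x - y)"
  have co2: "(norm (gh x - gh y))\<^sup>2 \<le> (L - mu) * P"
  proof (rule field_le_epsilon)
    fix e :: real assume e: "e > 0"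
    have "(norm (gh x - gh y))\<^sup>2 \<le> (L - mu + e / (P + 1)) * P"
      using co[of "e / (P + 1)"] e mono by (simp add: P_def)
    also have "\<dots> = (L - mu) * P + e * (P / (P + 1))" using mono by (simp add: P_def field_simps)
    also have "\<dots> \<le> (L - mu) * P + e * 1"
      using mono e by (intro add_left_mono mult_left_mono) (auto simp: P_def)
    finally show "(norm (gh x - gh y))\<^sup>2 \<le> (L - mu) * P + e" by simp
  qed
  have ghd: "gh x - gh y = (gf x - gf y) - mu *\<^sub>R (x - y)" by (simp add: gh_def algebra_simps)
  have n1: "(norm (gh x - gh y))\<^sup>2 = (norm (gf x - gf y))\<^sup>2 - 2 * mu * ((gf x - gf y) \<bullet> (x - y)) + mu\<^sup>2 * (norm (x - y))\<^sup>2"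
    unfolding ghd by (simp add: nsq_diff power_mult_distrib)
  have p1: "P = (gf x - gf y) \<bullet> (x - y) - mu * (norm (x - y))\<^sup>2"
    unfolding P_def ghd by (simp add: inner_diff_left power2_norm_eq_inner)
  show ?thesis using co2 n1 p1 by (simp add: algebra_simps power2_eq_square)
qed

lemma contraction:
  assumes g: "\<gamma> > 0"
  shows "(norm ((x - \<gamma> *\<^sub>R gf x) - (y - \<gamma> *\<^sub>R gf y)))\<^sup>2
         \<le> max ((1 - \<gamma> * mu)\<^sup>2) ((\<gamma> * L - 1)\<^sup>2) * (norm (x - y))\<^sup>2"
proof -
  define n where "n = (norm (x - y))\<^sup>2"
  define q where "q = (norm (gf x - gf y))\<^sup>2"
  define p where "p = (gf x - gf y) \<bullet> (x - y)"
  have nest: "q + mu * L * n \<le> (L + mu) * p" using nesterov by (simp add: q_def n_def p_def)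
  have Lpos: "L > 0" using mu_le_L mu_pos by simp
  have n0: "n \<ge> 0" by (simp add: n_def)
  have qL: "q \<le> L\<^sup>2 * n"
  proof -
    have "norm (gf x - gf y) \<le> L * norm (x - y)" by (rule f_smooth)
    then have "(norm (gf x - gf y))\<^sup>2 \<le> (L * norm (x - y))\<^sup>2" by (intro power_mono) auto
    then show ?thesis by (simp add: q_def n_def power_mult_distrib)
  qed
  have pmu: "mu * n \<le> p"
  proof -
    have "f x + gf x \<bullet> (y - x) + mu / 2 * (norm (y - x))\<^sup>2 \<le> f y" by (rule strong_lower)
    moreover have "f y + gf y \<bullet> (x - y) + mu / 2 * (norm (x - y))\<^sup>2 \<le> f x" by (rule strong_lower)
    moreover have "gf x \<bullet> (y - x) = - (gf x \<bullet> (x - y))" by (simp add: inner_diff_right)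
    moreover have "norm (y - x) = norm (x - y)" by (rule norm_minus_commute)
    ultimately show ?thesis by (simp add: p_def n_def inner_diff_left)
  qed
  have qmu: "mu\<^sup>2 * n \<le> q"
  proof -
    have "p \<le> norm (gf x - gf y) * norm (x - y)" unfolding p_def by (rule norm_cauchy_schwarz)
    then have "mu * (norm (x - y))\<^sup>2 \<le> norm (gf x - gf y) * norm (x - y)" using pmu n_def by simp
    then have "mu * norm (x - y) \<le> norm (gf x - gf y)"
      by (cases "norm (x - y) = 0") (auto simp: power2_eq_square)
    then have "(mu * norm (x - y))\<^sup>2 \<le> (norm (gf x - gf y))\<^sup>2"
      using mu_pos by (intro power_mono) auto
    then show ?thesis by (simp add: q_def n_def power_mult_distrib)
  qed
  have expand: "(norm ((x - \<gamma> *\<^sub>R gf x) - (y - \<gamma> *\<^sub>R gf y)))\<^sup>2 = n - 2 * \<gamma> * p + \<gamma>\<^sup>2 * q"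
  proof -
    have eqv: "(x - \<gamma> *\<^sub>R gf x) - (y - \<gamma> *\<^sub>R gf y) = (x - y) - \<gamma> *\<^sub>R (gf x - gf y)"
      by (simp add: algebra_simps)
    show ?thesis unfolding eqv nsq_diff[of "x - y" "\<gamma> *\<^sub>R (gf x - gf y)"] nsq_scale inner_scaleR_right
      using inner_commute[of "x - y" "gf x - gf y"] by (simp add: n_def p_def q_def del: norm_scaleR)
  qed
  have LM: "L + mu > 0" using Lpos mu_pos by simp
  have main: "(L + mu) * (n - 2 * \<gamma> * p + \<gamma>\<^sup>2 * q) \<le> (L + mu) * (max ((1 - \<gamma> * mu)\<^sup>2) ((\<gamma> * L - 1)\<^sup>2) * n)"
  proof -
    have A: "(L + mu) * (n - 2 * \<gamma> * p + \<gamma>\<^sup>2 * q) \<le> (L + mu) * n - 2 * \<gamma> * mu * L * n + \<gamma> * q * (\<gamma> * (L + mu) - 2)"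
    proof -
      have "2 * \<gamma> * (q + mu * L * n) \<le> 2 * \<gamma> * ((L + mu) * p)" using nest g by simp
      then show ?thesis by (simp add: algebra_simps power2_eq_square)
    qed
    show ?thesis
    proof (cases "\<gamma> * (L + mu) \<le> 2")
      case True
      have "\<gamma> * q * (\<gamma> * (L + mu) - 2) \<le> \<gamma> * (mu\<^sup>2 * n) * (\<gamma> * (L + mu) - 2)"
        using True qmu g by (intro mult_right_mono_neg mult_left_mono) auto
      moreover have "(L + mu) * n - 2 * \<gamma> * mu * L * n + \<gamma> * (mu\<^sup>2 * n) * (\<gamma> * (L + mu) - 2) = (L + mu) * ((1 - \<gamma> * mu)\<^sup>2 * n)"
        by (simp add: algebra_simps power2_eq_square)
      moreover have "(L + mu) * ((1 - \<gamma> * mu)\<^sup>2 * n) \<le> (L + mu) * (max ((1 - \<gamma> * mu)\<^sup>2) ((\<gamma> * L - 1)\<^sup>2) * n)"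
        using LM n0 by (intro mult_left_mono mult_right_mono) auto
      ultimately show ?thesis using A by linarith
    next
      case False
      have "\<gamma> * q * (\<gamma> * (L + mu) - 2) \<le> \<gamma> * (L\<^sup>2 * n) * (\<gamma> * (L + mu) - 2)"
        using False qL g by (intro mult_right_mono mult_left_mono) auto
      moreover have "(L + mu) * n - 2 * \<gamma> * mu * L * n + \<gamma> * (L\<^sup>2 * n) * (\<gamma> * (L + mu) - 2) = (L + mu) * ((\<gamma> * L - 1)\<^sup>2 * n)"
        by (simp add: algebra_simps power2_eq_square)
      moreover have "(L + mu) * ((\<gamma> * L - 1)\<^sup>2 * n) \<le> (L + mu) * (max ((1 - \<gamma> * mu)\<^sup>2) ((\<gamma> * L - 1)\<^sup>2) * n)"
        using LM n0 by (intro mult_left_mono mult_right_mono) auto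
      ultimately show ?thesis using A by linarith
    qed
  qed
  show ?thesis unfolding expand using main LM n_def by simp
qed

lemma fconj_bdd: "bdd_above (range (\<lambda>y. g \<bullet> y - f y))"
proof (rule bdd_aboveI2)
  fix y
  have sl: "f xs + gf xs \<bullet> (y - xs) + mu / 2 * (norm (y - xs))\<^sup>2 \<le> f y" for xs by (rule strong_lower)
  define a where "a = g - gf 0"
  define z where "z = y - 0"
  have q: "a \<bullet> z - mu / 2 * (norm z)\<^sup>2 \<le> (norm a)\<^sup>2 / (2 * mu)"
  proof -
    have "0 \<le> (norm (a - mu *\<^sub>R z))\<^sup>2" by simp
    also have "\<dots> = (norm a)\<^sup>2 - 2 * mu * (a \<bullet> z) + mu\<^sup>2 * (norm z)\<^sup>2"
      by (simp add: nsq_diff power_mult_distrib)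
    finally have "2 * mu * (a \<bullet> z - mu / 2 * (norm z)\<^sup>2) \<le> (norm a)\<^sup>2"
      by (simp add: algebra_simps power2_eq_square)
    then show ?thesis using mu_pos by (simp add: field_simps)
  qed
  have "g \<bullet> y - f y \<le> g \<bullet> 0 - f 0 + a \<bullet> z - mu / 2 * (norm z)\<^sup>2"
    using sl[of 0] by (simp add: a_def z_def inner_diff_left)
  also have "\<dots> \<le> g \<bullet> 0 - f 0 + (norm a)\<^sup>2 / (2 * mu)" using q by simp
  finally show "g \<bullet> y - f y \<le> g \<bullet> 0 - f 0 + (norm a)\<^sup>2 / (2 * mu)" .
qed

lemma kkt:
  fixes K :: "'x \<Rightarrow> 'u::euclidean_space" and b :: 'u and us0 :: 'u and xs :: 'x
  assumes lin: "linear K" and xs_feas: "K xs = b" and xs_opt: "\<And>y. K y = b \<Longrightarrow> f xs \<le> f y"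
    and us0_opt: "\<And>v. fconj f (- adjoint K us0) + us0 \<bullet> b \<le> fconj f (- adjoint K v) + v \<bullet> b"
  shows "gf xs = - adjoint K us0"
proof -
  have ker: "gf xs \<bullet> h = 0" if Kh: "K h = 0" for h
  proof -
    have "s * (- (gf xs \<bullet> h)) \<le> s\<^sup>2 * (L / 2 * (norm h)\<^sup>2)" for s
    proof -
      have "K (xs + s *\<^sub>R h) = b" using Kh xs_feas by (simp add: linear_add[OF lin] linear_scale[OF lin])
      then have "f xs \<le> f (xs + s *\<^sub>R h)" by (rule xs_opt)
      moreover have "f (xs + s *\<^sub>R h) \<le> f xs + gf xs \<bullet> (xs + s *\<^sub>R h - xs) + L / 2 * (norm (xs + s *\<^sub>R h - xs))\<^sup>2"
        by (rule descent)
      ultimately show ?thesis by (simp add: power_mult_distrib algebra_simps)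
    qed
    from quad_zero[OF this] show ?thesis by simp
  qed
  obtain y z where y: "y \<in> span (range (adjoint K))" and z: "\<And>w. w \<in> span (range (adjoint K)) \<Longrightarrow> orthogonal z w"
    and e: "gf xs = y + z"
    using orthogonal_subspace_decomp_exists by blast
  have sp: "span (range (adjoint K)) = range (adjoint K)"
    using range_subspace[OF adjoint_linear[OF lin]] span_eq_iff by blast
  have Kz: "K z = 0"
  proof -
    have "z \<bullet> adjoint K (K z) = 0" using z[of "adjoint K (K z)"] sp by (simp add: orthogonal_def)
    then have "K z \<bullet> K z = 0" by (simp add: adjoint_works[OF lin])
    then show ?thesis by simp
  qed
  have "z \<bullet> z = 0"
  proof -
    have "gf xs \<bullet> z = 0" using ker[OF Kz] .
    moreover have "y \<bullet> z = 0" using z[OF y] by (simp add: orthogonal_def inner_commute)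
    ultimately show ?thesis using e by (simp add: inner_add_left)
  qed
  then have "z = 0" by simp
  with e y sp obtain w where w: "gf xs = adjoint K w" by auto
  define u' where "u' = - w"
  have gu: "gf xs = - adjoint K u'" using w by (simp add: u'_def linear_neg[OF adjoint_linear[OF lin]])
  have maxgf: "gf xs \<bullet> y - f y \<le> gf xs \<bullet> xs - f xs" for y
  proof -
    have "0 \<le> mu / 2 * (norm (y - xs))\<^sup>2" using mu_pos by simp
    moreover have "gf xs \<bullet> (y - xs) = gf xs \<bullet> y - gf xs \<bullet> xs" by (simp add: inner_diff_right)
    ultimately show ?thesis using strong_lower[of xs y] by linarith
  qed
  have fc1: "fconj f (gf xs) = gf xs \<bullet> xs - f xs"
    unfolding fconj_def by (rule cSup_eq_maximum) (auto intro: maxgf)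
  have D1: "fconj f (- adjoint K u') + u' \<bullet> b = - f xs"
  proof -
    have "u' \<bullet> b = xs \<bullet> adjoint K u'" using xs_feas by (simp add: adjoint_works[OF lin] inner_commute)
    then show ?thesis using fc1 gu by (simp add: inner_commute)
  qed
  define g where "g = - adjoint K us0"
  have gx: "us0 \<bullet> b = - (g \<bullet> xs)"
    using xs_feas by (simp add: g_def adjoint_works[OF lin] inner_commute)
  have fcg: "fconj f g \<le> g \<bullet> xs - f xs" using us0_opt[of u'] D1 gx by (simp add: g_def)
  have maxg: "g \<bullet> y - f y \<le> g \<bullet> xs - f xs" for y
  proof -
    have "g \<bullet> y - f y \<le> fconj f g" unfolding fconj_def by (rule cSUP_upper[OF _ fconj_bdd]) simp
    then show ?thesis using fcg by simp
  qed
  have orth: "(g - gf xs) \<bullet> d = 0" for d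
  proof -
    have "s * ((g - gf xs) \<bullet> d) \<le> s\<^sup>2 * (L / 2 * (norm d)\<^sup>2)" for s
    proof -
      have "g \<bullet> (xs + s *\<^sub>R d) - f (xs + s *\<^sub>R d) \<le> g \<bullet> xs - f xs" by (rule maxg)
      moreover have "f (xs + s *\<^sub>R d) \<le> f xs + gf xs \<bullet> (xs + s *\<^sub>R d - xs) + L / 2 * (norm (xs + s *\<^sub>R d - xs))\<^sup>2"
        by (rule descent)
      ultimately show ?thesis by (simp add: power_mult_distrib algebra_simps inner_add_right inner_diff_left)
    qed
    from quad_zero[OF this] show ?thesis .
  qed
  have "g - gf xs = 0" using orth[of "g - gf xs"] by simp
  then show ?thesis by (simp add: g_def)
qed

end

locale rp =
  fixes K :: "'x::euclidean_space \<Rightarrow> 'u::euclidean_space"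
    and b :: 'u
    and f :: "'x \<Rightarrow> real" and gf :: "'x \<Rightarrow> 'x"
    and Lf muf :: real
    and M :: "'w measure"
    and x xh :: "nat \<Rightarrow> 'w \<Rightarrow> 'x"
    and u :: "nat \<Rightarrow> 'w \<Rightarrow> 'u"
    and \<rho> :: "nat \<Rightarrow> 'w \<Rightarrow> 'u"
    and x0 :: 'x and u0 :: 'u
    and \<gamma> \<tau> om om_ran \<zeta> :: real
    and xs :: 'x and us0 :: 'u
  assumes K_lin: "linear K" and K_nz: "K \<noteq> (\<lambda>_. 0)"
    and b_ran: "b \<in> range K"
    and f_grad: "\<And>y. (f has_derivative (\<lambda>h. gf y \<bullet> h)) (at y)"
    and f_convex: "convex_on UNIV f"
    and f_smooth: "\<And>y z. norm (gf y - gf z) \<le> Lf * norm (y - z)"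
    and f_strong: "convex_on UNIV (\<lambda>y. f y - muf / 2 * (norm y)\<^sup>2)"
    and mu_pos: "muf > 0"
    and gamma_pos: "\<gamma> > 0" and gamma_lt: "\<gamma> < 2 / Lf"
    and tau_pos: "\<tau> > 0"
    and om_nn: "om \<ge> 0" and om_ran_nn: "om_ran \<ge> 0"
    and zeta: "0 \<le> \<zeta>" "\<zeta> \<le> 1"
    and step: "\<gamma> * \<tau> * ((1 - \<zeta>) * (onorm K)\<^sup>2 + om_ran) \<le> 1"
    and P: "prob_space M"
    and x_init: "\<And>s. x 0 s = x0"
    and u_init: "\<And>s. u 0 s = u0"
    and xh_def: "\<And>t s. xh t s = x t s - \<gamma> *\<^sub>R gf (x t s) - \<gamma> *\<^sub>R adjoint K (u t s)"
    and u_step: "\<And>t s. u (Suc t) s = u t s + (\<tau> / (1 + om)) *\<^sub>R \<rho> t s"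
    and x_step: "\<And>t s. x (Suc t) s = xh t s
                   - (\<gamma> * (1 + om)) *\<^sub>R (adjoint K (u (Suc t) s) - adjoint K (u t s))"
    and rho_meas: "\<And>t. \<rho> t \<in> borel_measurable M"
    and rho_int: "\<And>t. integrable M (\<rho> t)"
    and rho_unbiased: "\<And>t a. AE s in M.
          real_cond_exp M (gen_filtr M x u t) (\<lambda>s. a \<bullet> \<rho> t s) s = a \<bullet> (K (xh t s) - b)"
    and rho_var: "\<And>t. AE s in M.
          nn_cond_exp M (gen_filtr M x u t)
             (\<lambda>s. ennreal ((norm (\<rho> t s - (K (xh t s) - b)))\<^sup>2)) s
          \<le> ennreal (om * (norm (K (xh t s) - b))\<^sup>2)"
    and rho_var_ran: "\<And>t. AE s in M.
          nn_cond_exp M (gen_filtr M x u t)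
             (\<lambda>s. ennreal ((norm (adjoint K (\<rho> t s - (K (xh t s) - b))))\<^sup>2)) s
          + ennreal (\<zeta> * (norm (adjoint K (K (xh t s) - b)))\<^sup>2)
          \<le> ennreal (om_ran * (norm (K (xh t s) - b))\<^sup>2)"
    and xs_feas: "K xs = b"
    and xs_opt: "\<And>y. K y = b \<Longrightarrow> f xs \<le> f y"
    and us0_ran: "us0 \<in> range K"
    and us0_opt: "\<And>v. fconj f (- adjoint K us0) + us0 \<bullet> b \<le> fconj f (- adjoint K v) + v \<bullet> b"
begin

abbreviation "F t \<equiv> gen_filtr M x u t"

lemma Lf_pos: "Lf > 0"
proof (rule ccontr)
  assume "\<not> Lf > 0"
  then have "2 / Lf \<le> 0" by (intro divide_nonneg_nonpos) auto
  then show False using gamma_pos gamma_lt by linarith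
qed

lemmas descent' = descent[OF f_grad f_smooth f_strong mu_pos]
lemmas strong_lower' = strong_lower[OF f_grad f_smooth f_strong mu_pos]
lemmas contraction' = contraction[OF f_grad f_smooth f_strong mu_pos]
lemmas mu_le_L' = mu_le_L[OF f_grad f_smooth f_strong mu_pos]

lemma kkt': "gf xs = - adjoint K us0"
  by (rule kkt[OF f_grad f_smooth f_strong mu_pos K_lin xs_feas xs_opt us0_opt])

lemma linA: "linear (adjoint K)" by (rule adjoint_linear[OF K_lin])

lemma gf_cont: "continuous_on UNIV gf"
proof (rule lipschitz_on_continuous_on)
  show "Lf-lipschitz_on UNIV gf"
    by (rule lipschitz_onI) (use f_smooth Lf_pos in \<open>auto simp: dist_norm\<close>)
qed

lemma meas_gf[measurable]: "gf \<in> borel_measurable borel"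
  by (rule borel_measurable_continuous_onI[OF gf_cont])
lemma meas_K[measurable]: "K \<in> borel_measurable borel"
  by (rule borel_measurable_continuous_onI[OF continuous_linear_fun[OF K_lin]])
lemma meas_A[measurable]: "adjoint K \<in> borel_measurable borel"
  by (rule borel_measurable_continuous_onI[OF continuous_linear_fun[OF linA]])
lemma meas_P[measurable]: "proj_ran K \<in> borel_measurable borel"
  by (rule borel_measurable_continuous_onI[OF continuous_linear_fun[OF proj_linear[OF K_lin]]])

lemma meas_rho[measurable]: "\<rho> t \<in> borel_measurable M" by (rule rho_meas)

lemma xh_eq: "xh t = (\<lambda>s. x t s - \<gamma> *\<^sub>R gf (x t s) - \<gamma> *\<^sub>R adjoint K (u t s))"
  using xh_def by blast

lemma meas_xu_M: "x t \<in> borel_measurable M \<and> u t \<in> borel_measurable M"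
proof (induction t)
  case 0
  have "x 0 = (\<lambda>s. x0)" "u 0 = (\<lambda>s. u0)" using x_init u_init by auto
  then show ?case by simp
next
  case (Suc t)
  then have [measurable]: "x t \<in> borel_measurable M" "u t \<in> borel_measurable M" by auto
  have ue: "u (Suc t) = (\<lambda>s. u t s + (\<tau> / (1 + om)) *\<^sub>R \<rho> t s)" using u_step by blast
  have xe: "x (Suc t) = (\<lambda>s. (x t s - \<gamma> *\<^sub>R gf (x t s) - \<gamma> *\<^sub>R adjoint K (u t s))
                   - (\<gamma> * (1 + om)) *\<^sub>R (adjoint K (u t s + (\<tau> / (1 + om)) *\<^sub>R \<rho> t s) - adjoint K (u t s)))"
    using x_step xh_def u_step by presburger
  show ?case unfolding ue xe by measurable
qed

lemma meas_x_M[measurable]: "x t \<in> borel_measurable M" using meas_xu_M by blast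
lemma meas_u_M[measurable]: "u t \<in> borel_measurable M" using meas_xu_M by blast
lemma meas_xh_M[measurable]: "xh t \<in> borel_measurable M" unfolding xh_eq by measurable

definition "G t = {(\<lambda>s. (x i s, u i s)) -` B \<inter> space M | i B. i \<le> t \<and> B \<in> sets borel}"

lemma G_sub: "G t \<subseteq> sets M"
proof
  fix A assume "A \<in> G t"
  then obtain i B where A: "A = (\<lambda>s. (x i s, u i s)) -` B \<inter> space M" and B: "B \<in> sets borel"
    unfolding G_def by blast
  have "(\<lambda>s. (x i s, u i s)) \<in> borel_measurable M" by measurable
  then show "A \<in> sets M" using A B by (simp add: measurable_sets)
qed

lemma G_pow: "G t \<subseteq> Pow (space M)" unfolding G_def by auto

lemma F_eq: "F t = sigma (space M) (G t)" unfolding gen_filtr_def G_def by simp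

lemma space_F: "space (F t) = space M" unfolding F_eq by (simp add: space_measure_of_conv)
lemma sets_F: "sets (F t) = sigma_sets (space M) (G t)" unfolding F_eq using G_pow by (simp add: sets_measure_of)

lemma subalg: "subalgebra M (F t)"
  unfolding subalgebra_def space_F sets_F using sets.sigma_sets_subset[OF G_sub] by simp

lemma sfs: "sigma_finite_subalgebra M (F t)"
proof (rule finite_measure_subalgebra_is_sigma_finite)
  interpret prob_space M by (rule P)
  show "finite_measure_subalgebra M (F t)"
    unfolding finite_measure_subalgebra_def finite_measure_subalgebra_axioms_def
    using subalg finite_measure_axioms by simp
qed

lemma meas_pair_F: "(\<lambda>s. (x t s, u t s)) \<in> borel_measurable (F t)"
proof (rule measurableI)
  fix s assume "s \<in> space (F t)" then show "(x t s, u t s) \<in> space borel" by simp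
next
  fix B :: "('x \<times> 'u) set" assume "B \<in> sets borel"
  then have "(\<lambda>s. (x t s, u t s)) -` B \<inter> space M \<in> G t" unfolding G_def by blast
  then show "(\<lambda>s. (x t s, u t s)) -` B \<inter> space (F t) \<in> sets (F t)"
    unfolding space_F sets_F by auto
qed

lemma meas_x_F[measurable]: "x t \<in> borel_measurable (F t)"
proof -
  have "fst \<in> borel_measurable (borel :: ('x \<times> 'u) measure)"
    by (rule borel_measurable_continuous_onI) (intro continuous_intros)
  from measurable_compose[OF meas_pair_F this] show ?thesis by simp
qed

lemma meas_u_F[measurable]: "u t \<in> borel_measurable (F t)"
proof -
  have "snd \<in> borel_measurable (borel :: ('x \<times> 'u) measure)"
    by (rule borel_measurable_continuous_onI) (intro continuous_intros)
  from measurable_compose[OF meas_pair_F this] show ?thesis by simp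
qed

lemma meas_xh_F[measurable]: "xh t \<in> borel_measurable (F t)" unfolding xh_eq by measurable

definition "kap = \<tau> / (1 + om)"
definition "Psi t s = (1 / \<gamma>) * (norm (x t s - xs))\<^sup>2 + ((1 + om) / \<tau>) * (norm (proj_ran K (u t s) - us0))\<^sup>2"
definition "cc = max ((1 - \<gamma> * muf)\<^sup>2) (max ((\<gamma> * Lf - 1)\<^sup>2) (1 - \<gamma> * \<tau> * lambda_min_pos K / (1 + om)))"
definition "aa t s = xh t s - xs"
definition "Du t s = proj_ran K (u t s) - us0"
definition "rr t s = K (xh t s) - b"
definition "ee t s = \<rho> t s - (K (xh t s) - b)"
definition "BB t s = (1 / \<gamma>) * (norm (aa t s))\<^sup>2 + ((1 + om) / \<tau>) * (norm (Du t s))\<^sup>2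
    - \<gamma> * \<tau>\<^sup>2 * (norm (adjoint K (rr t s)))\<^sup>2 - kap * (norm (rr t s))\<^sup>2"
definition "gg t s = 2 *\<^sub>R Du t s - (2 * \<tau>) *\<^sub>R rr t s + (2 * \<gamma> * \<tau>\<^sup>2) *\<^sub>R K (adjoint K (rr t s)) + (2 * kap) *\<^sub>R rr t s"

lemma om1: "1 + om > 0" using om_nn by simp
lemma kap_pos: "kap > 0" using tau_pos om1 by (simp add: kap_def)
lemma kap_om: "kap + kap * om = \<tau>"
proof -
  have "kap + kap * om = kap * (1 + om)" by (simp add: algebra_simps)
  also have "\<dots> = \<tau>" using om1 by (simp add: kap_def)
  finally show ?thesis .
qed

lemma Ka: "K (aa t s) = rr t s"
  by (simp add: aa_def rr_def linear_diff[OF K_lin] xs_feas)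

lemma Du_ran: "Du t s \<in> range K"
proof -
  have "proj_ran K (u t s) \<in> range K" using proj_char[OF K_lin] by blast
  then show ?thesis using us0_ran range_subspace[OF K_lin] by (simp add: Du_def subspace_diff)
qed

lemma Psi_nn: "Psi t s \<ge> 0" using gamma_pos tau_pos om1 by (simp add: Psi_def)

lemma P1: "Psi (Suc t) s \<le> BB t s + gg t s \<bullet> \<rho> t s + \<gamma> * \<tau>\<^sup>2 * (norm (adjoint K (ee t s)))\<^sup>2 + kap * (norm (ee t s))\<^sup>2"
proof -
  let ?A = "adjoint K" and ?P = "proj_ran K"
  define a where "a = aa t s"
  define R where "R = \<rho> t s"
  define r where "r = rr t s"
  define e where "e = ee t s"
  define D where "D = Du t s"
  have Rre: "R = r + e" by (simp add: R_def r_def e_def ee_def rr_def)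
  have Kar: "K a = r" by (simp add: a_def r_def Ka)
  have h1: "x (Suc t) s - xs = a - (\<gamma> * \<tau>) *\<^sub>R ?A R"
  proof -
    have "?A (u (Suc t) s) - ?A (u t s) = kap *\<^sub>R ?A R"
      by (simp add: u_step linear_add[OF linA] linear_scale[OF linA] kap_def R_def)
    moreover have "\<gamma> * (1 + om) * kap = \<gamma> * \<tau>" using om1 by (simp add: kap_def)
    ultimately show ?thesis by (simp add: x_step a_def aa_def algebra_simps)
  qed
  have h2: "(1 / \<gamma>) * (norm (x (Suc t) s - xs))\<^sup>2 = (1 / \<gamma>) * (norm a)\<^sup>2 - 2 * \<tau> * (r \<bullet> R) + \<gamma> * \<tau>\<^sup>2 * (norm (?A R))\<^sup>2"
  proof -
    have "a \<bullet> ?A R = r \<bullet> R" using Kar by (simp add: adjoint_works[OF K_lin])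
    then show ?thesis unfolding h1 nsq_diff nsq_scale using gamma_pos
      by (simp add: field_simps power2_eq_square)
  qed
  have h3: "?P (u (Suc t) s) - us0 = D + kap *\<^sub>R ?P R"
    using linear_add[OF proj_linear[OF K_lin]] linear_scale[OF proj_linear[OF K_lin]]
    by (simp add: u_step D_def Du_def kap_def R_def)
  have DPR: "D \<bullet> ?P R = D \<bullet> R"
  proof -
    have "(R - ?P R) \<bullet> D = 0" using proj_char[OF K_lin] Du_ran D_def by blast
    then have "D \<bullet> (R - ?P R) = 0" by (simp add: inner_commute)
    moreover have "D \<bullet> (R - ?P R) = D \<bullet> R - D \<bullet> ?P R" by (rule inner_diff_right)
    ultimately show ?thesis by linarith
  qed
  have PRle: "(norm (?P R))\<^sup>2 \<le> (norm R)\<^sup>2"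
  proof -
    have o: "(R - ?P R) \<bullet> ?P R = 0" using proj_char[OF K_lin] by blast
    have "R = ?P R + (R - ?P R)" by simp
    then have "(norm R)\<^sup>2 = (norm (?P R))\<^sup>2 + 2 * (?P R \<bullet> (R - ?P R)) + (norm (R - ?P R))\<^sup>2"
      by (metis nsq_add)
    then show ?thesis using o by (simp add: inner_commute)
  qed
  have h4: "((1 + om) / \<tau>) * (norm (?P (u (Suc t) s) - us0))\<^sup>2 \<le> ((1 + om) / \<tau>) * (norm D)\<^sup>2 + 2 * (D \<bullet> R) + kap * (norm R)\<^sup>2"
  proof -
    have "((1 + om) / \<tau>) * (norm (D + kap *\<^sub>R ?P R))\<^sup>2 = ((1 + om) / \<tau>) * (norm D)\<^sup>2 + ((1 + om) / \<tau>) * (2 * kap) * (D \<bullet> ?P R) + ((1 + om) / \<tau>) * kap\<^sup>2 * (norm (?P R))\<^sup>2"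
      unfolding nsq_add nsq_scale by (simp add: algebra_simps)
    also have "((1 + om) / \<tau>) * (2 * kap) = 2"
    proof -
      have "((1 + om) / \<tau>) * kap = 1" using om1 tau_pos by (simp add: kap_def)
      then show ?thesis by (metis mult.left_commute mult.right_neutral)
    qed
    also have "((1 + om) / \<tau>) * kap\<^sup>2 = kap" using om1 tau_pos by (simp add: kap_def power2_eq_square)
    finally have eq: "((1 + om) / \<tau>) * (norm (D + kap *\<^sub>R ?P R))\<^sup>2 = ((1 + om) / \<tau>) * (norm D)\<^sup>2 + 2 * (D \<bullet> R) + kap * (norm (?P R))\<^sup>2"
      using DPR by simp
    have "kap * (norm (?P R))\<^sup>2 \<le> kap * (norm R)\<^sup>2" using kap_pos PRle by simp
    then show ?thesis unfolding h3 eq by simp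
  qed
  have h5: "(norm (?A R))\<^sup>2 = (norm (?A e))\<^sup>2 + 2 * (K (?A r) \<bullet> R) - (norm (?A r))\<^sup>2"
  proof -
    have AR: "?A R = ?A r + ?A e" unfolding Rre by (simp add: linear_add[OF linA])
    have "K (?A r) \<bullet> R = ?A r \<bullet> ?A R" by (simp add: adjoint_works[OF K_lin])
    also have "\<dots> = (norm (?A r))\<^sup>2 + ?A r \<bullet> ?A e" unfolding AR by (simp add: inner_add_right power2_norm_eq_inner)
    finally show ?thesis unfolding AR nsq_add by simp
  qed
  have h6: "(norm R)\<^sup>2 = (norm e)\<^sup>2 + 2 * (r \<bullet> R) - (norm r)\<^sup>2"
  proof -
    have "r \<bullet> R = (norm r)\<^sup>2 + r \<bullet> e" unfolding Rre by (simp add: inner_add_right power2_norm_eq_inner)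
    then show ?thesis unfolding Rre nsq_add by simp
  qed
  have gR: "gg t s \<bullet> R = 2 * (D \<bullet> R) - 2 * \<tau> * (r \<bullet> R) + 2 * \<gamma> * \<tau>\<^sup>2 * (K (?A r) \<bullet> R) + 2 * kap * (r \<bullet> R)"
    by (simp add: gg_def D_def r_def inner_add_left inner_diff_left)
  have "Psi (Suc t) s = (1 / \<gamma>) * (norm (x (Suc t) s - xs))\<^sup>2 + ((1 + om) / \<tau>) * (norm (?P (u (Suc t) s) - us0))\<^sup>2"
    by (simp add: Psi_def)
  also have "\<dots> \<le> (1 / \<gamma>) * (norm a)\<^sup>2 - 2 * \<tau> * (r \<bullet> R) + \<gamma> * \<tau>\<^sup>2 * (norm (?A R))\<^sup>2 + (((1 + om) / \<tau>) * (norm D)\<^sup>2 + 2 * (D \<bullet> R) + kap * (norm R)\<^sup>2)"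
    using h2 h4 by linarith
  also have "\<dots> = BB t s + gg t s \<bullet> R + \<gamma> * \<tau>\<^sup>2 * (norm (?A e))\<^sup>2 + kap * (norm e)\<^sup>2"
    unfolding gR h5 h6 by (simp add: BB_def a_def D_def r_def algebra_simps)
  finally show ?thesis by (simp add: R_def e_def)
qed

lemma lam: "lambda_min_pos K > 0" "\<And>v. v \<in> range K \<Longrightarrow> lambda_min_pos K * (norm v)\<^sup>2 \<le> (norm (adjoint K v))\<^sup>2"
  using eig[OF K_lin K_nz] by auto

lemma P2: "BB t s + gg t s \<bullet> rr t s + \<gamma> * \<tau>\<^sup>2 * (om_ran * (norm (rr t s))\<^sup>2 - \<zeta> * (norm (adjoint K (rr t s)))\<^sup>2)
   + kap * (om * (norm (rr t s))\<^sup>2) \<le> cc * Psi t s"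
proof -
  let ?A = "adjoint K" and ?P = "proj_ran K"
  define a where "a = aa t s"
  define r where "r = rr t s"
  define D where "D = Du t s"
  define X where "X = x t s"
  define w where "w = (X - \<gamma> *\<^sub>R gf X) - (xs - \<gamma> *\<^sub>R gf xs)"
  define lm where "lm = lambda_min_pos K"
  define c1 where "c1 = max ((1 - \<gamma> * muf)\<^sup>2) ((\<gamma> * Lf - 1)\<^sup>2)"
  have Kar: "K a = r" by (simp add: a_def r_def Ka)
  have gr: "gg t s \<bullet> r = 2 * (D \<bullet> r) - 2 * \<tau> * (norm r)\<^sup>2 + 2 * \<gamma> * \<tau>\<^sup>2 * (norm (?A r))\<^sup>2 + 2 * kap * (norm r)\<^sup>2"
  proof -
    have "K (?A r) \<bullet> r = (norm (?A r))\<^sup>2" by (simp add: adjoint_works[OF K_lin, symmetric] power2_norm_eq_inner)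
    then show ?thesis by (simp add: gg_def D_def r_def inner_add_left inner_diff_left power2_norm_eq_inner)
  qed
  have stepb: "\<gamma> * \<tau>\<^sup>2 * ((1 - \<zeta>) * (norm (?A r))\<^sup>2 + om_ran * (norm r)\<^sup>2) \<le> \<tau> * (norm r)\<^sup>2"
  proof -
    have "(1 - \<zeta>) * (norm (?A r))\<^sup>2 \<le> (1 - \<zeta>) * ((onorm K)\<^sup>2 * (norm r)\<^sup>2)"
      using zeta adj_norm[OF K_lin] by (intro mult_left_mono) auto
    then have "\<gamma> * \<tau>\<^sup>2 * ((1 - \<zeta>) * (norm (?A r))\<^sup>2 + om_ran * (norm r)\<^sup>2) \<le> \<gamma> * \<tau>\<^sup>2 * ((1 - \<zeta>) * ((onorm K)\<^sup>2 * (norm r)\<^sup>2) + om_ran * (norm r)\<^sup>2)"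
      using gamma_pos by (intro mult_left_mono) auto
    also have "\<dots> = \<tau> * (norm r)\<^sup>2 * (\<gamma> * \<tau> * ((1 - \<zeta>) * (onorm K)\<^sup>2 + om_ran))"
      by (simp add: algebra_simps power2_eq_square)
    also have "\<dots> \<le> \<tau> * (norm r)\<^sup>2 * 1"
      using step tau_pos by (intro mult_left_mono) auto
    finally show ?thesis by simp
  qed
  have L1: "BB t s + gg t s \<bullet> rr t s + \<gamma> * \<tau>\<^sup>2 * (om_ran * (norm (rr t s))\<^sup>2 - \<zeta> * (norm (adjoint K (rr t s)))\<^sup>2)
   + kap * (om * (norm (rr t s))\<^sup>2) \<le> (1 / \<gamma>) * (norm a)\<^sup>2 + ((1 + om) / \<tau>) * (norm D)\<^sup>2 + 2 * (D \<bullet> r)"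
  proof -
    have "BB t s + gg t s \<bullet> rr t s + \<gamma> * \<tau>\<^sup>2 * (om_ran * (norm (rr t s))\<^sup>2 - \<zeta> * (norm (adjoint K (rr t s)))\<^sup>2)
      + kap * (om * (norm (rr t s))\<^sup>2) = (1 / \<gamma>) * (norm a)\<^sup>2 + ((1 + om) / \<tau>) * (norm D)\<^sup>2 + 2 * (D \<bullet> r)
      - 2 * \<tau> * (norm r)\<^sup>2 + (kap + kap * om) * (norm r)\<^sup>2 + \<gamma> * \<tau>\<^sup>2 * ((1 - \<zeta>) * (norm (?A r))\<^sup>2 + om_ran * (norm r)\<^sup>2)"
      unfolding gr[unfolded r_def] by (simp add: BB_def a_def D_def r_def algebra_simps)
    then show ?thesis using stepb kap_om by simp
  qed
  have AU: "?A (u t s) = ?A D - gf xs"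
  proof -
    have "?A (u t s) = ?A (?P (u t s))" by (simp add: adj_proj[OF K_lin])
    also have "?P (u t s) = D + us0" by (simp add: D_def Du_def)
    finally show ?thesis by (simp add: linear_add[OF linA] kkt')
  qed
  have aw: "a = w - \<gamma> *\<^sub>R ?A D"
    by (simp add: a_def aa_def xh_def AU w_def X_def algebra_simps)
  have Dr: "D \<bullet> r = ?A D \<bullet> a" using Kar by (simp add: adjoint_works[OF K_lin] inner_commute)
  have L2: "(1 / \<gamma>) * (norm a)\<^sup>2 + 2 * (D \<bullet> r) = (1 / \<gamma>) * (norm w)\<^sup>2 - \<gamma> * (norm (?A D))\<^sup>2"
  proof -
    have "(1 / \<gamma>) * (norm a)\<^sup>2 = (1 / \<gamma>) * (norm w)\<^sup>2 - 2 * (w \<bullet> ?A D) + \<gamma> * (norm (?A D))\<^sup>2"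
      unfolding aw nsq_diff nsq_scale using gamma_pos by (simp add: field_simps power2_eq_square)
    moreover have "D \<bullet> r = w \<bullet> ?A D - \<gamma> * (norm (?A D))\<^sup>2"
      unfolding Dr aw by (simp add: inner_diff_right inner_commute power2_norm_eq_inner)
    ultimately show ?thesis by simp
  qed
  have wc: "(norm w)\<^sup>2 \<le> c1 * (norm (X - xs))\<^sup>2" unfolding w_def c1_def by (rule contraction'[OF gamma_pos])
  have Dl: "lm * (norm D)\<^sup>2 \<le> (norm (?A D))\<^sup>2" unfolding lm_def D_def by (rule lam(2)[OF Du_ran])
  have c1c: "c1 \<le> cc" by (simp add: c1_def cc_def)
  have c2c: "(1 + om) / \<tau> - \<gamma> * lm \<le> cc * ((1 + om) / \<tau>)"
  proof -
    have "1 - \<gamma> * \<tau> * lm / (1 + om) \<le> cc" by (simp add: cc_def lm_def)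
    then have "((1 + om) / \<tau>) * (1 - \<gamma> * \<tau> * lm / (1 + om)) \<le> ((1 + om) / \<tau>) * cc"
      using om1 tau_pos by (intro mult_left_mono) auto
    moreover have "((1 + om) / \<tau>) * (1 - \<gamma> * \<tau> * lm / (1 + om)) = (1 + om) / \<tau> - \<gamma> * lm"
    proof -
      have n1: "1 + om \<noteq> 0" "\<tau> \<noteq> 0" using om1 tau_pos by auto
      have "((1 + om) / \<tau>) * (\<gamma> * \<tau> * lm / (1 + om)) = \<gamma> * lm" using n1 by simp
      then show ?thesis by (simp add: right_diff_distrib)
    qed
    ultimately show ?thesis by (simp add: mult.commute)
  qed
  have "(1 / \<gamma>) * (norm a)\<^sup>2 + ((1 + om) / \<tau>) * (norm D)\<^sup>2 + 2 * (D \<bullet> r)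
        = (1 / \<gamma>) * (norm w)\<^sup>2 - \<gamma> * (norm (?A D))\<^sup>2 + ((1 + om) / \<tau>) * (norm D)\<^sup>2" using L2 by simp
  also have "\<dots> \<le> (1 / \<gamma>) * (c1 * (norm (X - xs))\<^sup>2) - \<gamma> * (lm * (norm D)\<^sup>2) + ((1 + om) / \<tau>) * (norm D)\<^sup>2"
  proof -
    have "(1 / \<gamma>) * (norm w)\<^sup>2 \<le> (1 / \<gamma>) * (c1 * (norm (X - xs))\<^sup>2)" using wc gamma_pos by (intro mult_left_mono) auto
    moreover have "\<gamma> * (lm * (norm D)\<^sup>2) \<le> \<gamma> * (norm (?A D))\<^sup>2" using Dl gamma_pos by (intro mult_left_mono) auto
    ultimately show ?thesis by linarith
  qed
  also have "\<dots> = c1 * ((1 / \<gamma>) * (norm (X - xs))\<^sup>2) + ((1 + om) / \<tau> - \<gamma> * lm) * (norm D)\<^sup>2"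
    by (simp add: algebra_simps)
  also have "\<dots> \<le> cc * ((1 / \<gamma>) * (norm (X - xs))\<^sup>2) + (cc * ((1 + om) / \<tau>)) * (norm D)\<^sup>2"
    using c1c c2c gamma_pos by (intro add_mono mult_right_mono) auto
  also have "\<dots> = cc * Psi t s" by (simp add: Psi_def X_def D_def Du_def algebra_simps)
  finally show ?thesis using L1 by linarith
qed

end

context rp begin

definition "NN t s = norm (x t s - xs) + norm (Du t s)"
definition "QQ t s = (norm (x t s - xs))\<^sup>2 + (norm (Du t s))\<^sup>2"
definition "K0 = onorm K"
definition "Ca = 1 + \<gamma> * Lf + \<gamma> * K0"

lemma K0_nn: "K0 \<ge> 0" unfolding K0_def by (rule onorm_pos_le) (simp add: linear_linear K_lin)
lemma Ca_nn: "Ca \<ge> 0" using K0_nn Lf_pos gamma_pos by (simp add: Ca_def)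

lemma normK: "norm (K v) \<le> K0 * norm v"
  unfolding K0_def by (rule onorm) (simp add: linear_linear K_lin)

lemma normA: "norm (adjoint K v) \<le> K0 * norm v"
proof -
  have "(norm (adjoint K v))\<^sup>2 \<le> (K0 * norm v)\<^sup>2"
    using adj_norm[OF K_lin, of v] by (simp add: K0_def power_mult_distrib)
  moreover have "0 \<le> K0 * norm v" using K0_nn by simp
  ultimately show ?thesis by (rule power2_le_imp_le)
qed

lemma aw_gen: "aa t s = ((x t s - \<gamma> *\<^sub>R gf (x t s)) - (xs - \<gamma> *\<^sub>R gf xs)) - \<gamma> *\<^sub>R adjoint K (Du t s)"
proof -
  have "adjoint K (u t s) = adjoint K (proj_ran K (u t s))" by (simp add: adj_proj[OF K_lin])
  also have "proj_ran K (u t s) = Du t s + us0" by (simp add: Du_def)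
  finally have AU: "adjoint K (u t s) = adjoint K (Du t s) - gf xs" by (simp add: linear_add[OF linA] kkt')
  show ?thesis by (simp add: aa_def xh_def AU algebra_simps)
qed

lemma NN_nn: "NN t s \<ge> 0" by (simp add: NN_def)

lemma bound_a: "norm (aa t s) \<le> Ca * NN t s"
proof -
  have "norm (aa t s) \<le> norm ((x t s - xs) - \<gamma> *\<^sub>R (gf (x t s) - gf xs)) + norm (\<gamma> *\<^sub>R adjoint K (Du t s))"
    unfolding aw_gen by (rule order_trans[OF norm_triangle_ineq4]) (simp add: algebra_simps)
  also have "\<dots> \<le> (norm (x t s - xs) + \<gamma> * (Lf * norm (x t s - xs))) + \<gamma> * (K0 * norm (Du t s))"
  proof (intro add_mono)
    show "norm ((x t s - xs) - \<gamma> *\<^sub>R (gf (x t s) - gf xs)) \<le> norm (x t s - xs) + \<gamma> * (Lf * norm (x t s - xs))"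
    proof -
      have "norm ((x t s - xs) - \<gamma> *\<^sub>R (gf (x t s) - gf xs)) \<le> norm (x t s - xs) + norm (\<gamma> *\<^sub>R (gf (x t s) - gf xs))"
        by (rule norm_triangle_ineq4)
      also have "norm (\<gamma> *\<^sub>R (gf (x t s) - gf xs)) = \<gamma> * norm (gf (x t s) - gf xs)" using gamma_pos by simp
      also have "\<gamma> * norm (gf (x t s) - gf xs) \<le> \<gamma> * (Lf * norm (x t s - xs))"
        using f_smooth gamma_pos by (intro mult_left_mono) auto
      finally show ?thesis by simp
    qed
    show "norm (\<gamma> *\<^sub>R adjoint K (Du t s)) \<le> \<gamma> * (K0 * norm (Du t s))"
      using normA gamma_pos by (simp add: mult_left_mono)
  qed
  also have "\<dots> \<le> Ca * NN t s"
  proof -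
    define n where "n = norm (x t s - xs)"
    define d where "d = norm (Du t s)"
    have eq: "Ca * NN t s = (n + \<gamma> * (Lf * n)) + \<gamma> * (K0 * d) + (n * \<gamma> * K0 + d + d * \<gamma> * Lf)"
      by (simp add: Ca_def NN_def n_def d_def algebra_simps)
    have "0 \<le> n * \<gamma> * K0 + d + d * \<gamma> * Lf"
      using gamma_pos Lf_pos K0_nn by (simp add: n_def d_def)
    then show ?thesis unfolding eq n_def d_def by linarith
  qed
  finally show ?thesis .
qed

lemma bound_r: "norm (rr t s) \<le> (K0 * Ca) * NN t s"
proof -
  have "norm (rr t s) \<le> K0 * norm (aa t s)" using normK[of "aa t s"] by (simp add: Ka)
  also have "\<dots> \<le> K0 * (Ca * NN t s)" using bound_a K0_nn by (intro mult_left_mono) auto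
  finally show ?thesis by (simp add: mult.assoc)
qed

lemma bound_Ar: "norm (adjoint K (rr t s)) \<le> (K0 * (K0 * Ca)) * NN t s"
proof -
  have "norm (adjoint K (rr t s)) \<le> K0 * norm (rr t s)" by (rule normA)
  also have "\<dots> \<le> K0 * ((K0 * Ca) * NN t s)" using bound_r K0_nn by (intro mult_left_mono) auto
  finally show ?thesis by (simp add: mult.assoc)
qed

lemma bound_KAr: "norm (K (adjoint K (rr t s))) \<le> (K0 * (K0 * (K0 * Ca))) * NN t s"
proof -
  have "norm (K (adjoint K (rr t s))) \<le> K0 * norm (adjoint K (rr t s))" by (rule normK)
  also have "\<dots> \<le> K0 * ((K0 * (K0 * Ca)) * NN t s)" using bound_Ar K0_nn by (intro mult_left_mono) auto
  finally show ?thesis by (simp add: mult.assoc)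
qed

definition "Cg = 2 + 2 * \<tau> * (K0 * Ca) + 2 * \<gamma> * \<tau>\<^sup>2 * (K0 * (K0 * (K0 * Ca))) + 2 * kap * (K0 * Ca)"

lemma Cg_nn: "Cg \<ge> 0" using K0_nn Ca_nn tau_pos gamma_pos kap_pos by (simp add: Cg_def)

lemma bound_g: "norm (gg t s) \<le> Cg * NN t s"
proof -
  have "norm (gg t s) \<le> norm (2 *\<^sub>R Du t s) + norm ((2 * \<tau>) *\<^sub>R rr t s) + norm ((2 * \<gamma> * \<tau>\<^sup>2) *\<^sub>R K (adjoint K (rr t s))) + norm ((2 * kap) *\<^sub>R rr t s)"
  proof -
    have t1: "norm (a - b + c + d) \<le> norm a + norm b + norm c + norm d" for a b c d :: 'u
    proof -
      have "norm (a - b + c + d) \<le> norm (a - b + c) + norm d" by (rule norm_triangle_ineq)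
      moreover have "norm (a - b + c) \<le> norm (a - b) + norm c" by (rule norm_triangle_ineq)
      moreover have "norm (a - b) \<le> norm a + norm b" by (rule norm_triangle_ineq4)
      ultimately show ?thesis by linarith
    qed
    show ?thesis unfolding gg_def by (rule t1)
  qed
  also have "\<dots> = 2 * norm (Du t s) + 2 * \<tau> * norm (rr t s) + 2 * \<gamma> * \<tau>\<^sup>2 * norm (K (adjoint K (rr t s))) + 2 * kap * norm (rr t s)"
    using tau_pos gamma_pos kap_pos by simp
  also have "\<dots> \<le> 2 * NN t s + 2 * \<tau> * ((K0 * Ca) * NN t s) + 2 * \<gamma> * \<tau>\<^sup>2 * ((K0 * (K0 * (K0 * Ca))) * NN t s) + 2 * kap * ((K0 * Ca) * NN t s)"
  proof -
    have "norm (Du t s) \<le> NN t s" by (simp add: NN_def)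
    moreover have "2 * \<tau> * norm (rr t s) \<le> 2 * \<tau> * ((K0 * Ca) * NN t s)" using bound_r tau_pos by (intro mult_left_mono) auto
    moreover have "2 * \<gamma> * \<tau>\<^sup>2 * norm (K (adjoint K (rr t s))) \<le> 2 * \<gamma> * \<tau>\<^sup>2 * ((K0 * (K0 * (K0 * Ca))) * NN t s)"
      using bound_KAr tau_pos gamma_pos by (intro mult_left_mono) auto
    moreover have "2 * kap * norm (rr t s) \<le> 2 * kap * ((K0 * Ca) * NN t s)" using bound_r kap_pos by (intro mult_left_mono) auto
    ultimately show ?thesis by linarith
  qed
  also have "\<dots> = Cg * NN t s" by (simp add: Cg_def algebra_simps)
  finally show ?thesis .
qed

lemma NN_QQ: "(NN t s)\<^sup>2 \<le> 2 * QQ t s"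
proof -
  have "(norm (x t s - xs) + norm (Du t s))\<^sup>2 \<le> 2 * ((norm (x t s - xs))\<^sup>2 + (norm (Du t s))\<^sup>2)"
  proof -
    have "0 \<le> (norm (x t s - xs) - norm (Du t s))\<^sup>2" by simp
    then show ?thesis unfolding power2_sum power2_diff by (smt (verit))
  qed
  then show ?thesis by (simp add: NN_def QQ_def)
qed

lemma QQ_Psi: "QQ t s \<le> (\<gamma> + kap) * Psi t s"
proof -
  have 1: "(norm (x t s - xs))\<^sup>2 = \<gamma> * ((1 / \<gamma>) * (norm (x t s - xs))\<^sup>2)" using gamma_pos by simp
  have 2: "(norm (Du t s))\<^sup>2 = kap * (((1 + om) / \<tau>) * (norm (Du t s))\<^sup>2)" using om1 tau_pos by (simp add: kap_def)
  have a: "0 \<le> (1 / \<gamma>) * (norm (x t s - xs))\<^sup>2" using gamma_pos by simp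
  have b: "0 \<le> ((1 + om) / \<tau>) * (norm (Du t s))\<^sup>2" using om1 tau_pos by simp
  have "QQ t s = \<gamma> * ((1 / \<gamma>) * (norm (x t s - xs))\<^sup>2) + kap * (((1 + om) / \<tau>) * (norm (Du t s))\<^sup>2)"
    unfolding QQ_def using 1 2 by simp
  also have "\<dots> \<le> (\<gamma> + kap) * ((1 / \<gamma>) * (norm (x t s - xs))\<^sup>2 + ((1 + om) / \<tau>) * (norm (Du t s))\<^sup>2)"
  proof -
    define A where "A = (1 / \<gamma>) * (norm (x t s - xs))\<^sup>2"
    define B where "B = ((1 + om) / \<tau>) * (norm (Du t s))\<^sup>2"
    have "(\<gamma> + kap) * (A + B) = \<gamma> * A + kap * B + (\<gamma> * B + kap * A)" by (simp add: algebra_simps)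
    moreover have "0 \<le> \<gamma> * B + kap * A" using a b gamma_pos kap_pos
      unfolding A_def[symmetric] B_def[symmetric] by (intro add_nonneg_nonneg mult_nonneg_nonneg) auto
    ultimately show ?thesis unfolding A_def B_def by linarith
  qed
  also have "\<dots> = (\<gamma> + kap) * Psi t s" by (simp add: Psi_def Du_def)
  finally show ?thesis .
qed

lemma sq_bound: assumes "norm v \<le> C * NN t s" "C \<ge> 0" shows "(norm v)\<^sup>2 \<le> (2 * C\<^sup>2) * QQ t s"
proof -
  have "(norm v)\<^sup>2 \<le> (C * NN t s)\<^sup>2" using assms by (intro power_mono) auto
  also have "\<dots> = C\<^sup>2 * (NN t s)\<^sup>2" by (simp add: power_mult_distrib)
  also have "\<dots> \<le> C\<^sup>2 * (2 * QQ t s)" using NN_QQ by (intro mult_left_mono) auto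
  finally show ?thesis by simp
qed

lemma prod_bound: assumes "norm v \<le> C * NN t s" "C \<ge> 0" "norm v' \<le> C' * NN t s" "C' \<ge> 0"
  shows "\<bar>v \<bullet> v'\<bar> \<le> (2 * C * C') * QQ t s"
proof -
  have "\<bar>v \<bullet> v'\<bar> \<le> norm v * norm v'" by (rule Cauchy_Schwarz_ineq2)
  also have "\<dots> \<le> (C * NN t s) * (C' * NN t s)" using assms by (intro mult_mono) (auto intro: mult_nonneg_nonneg NN_nn)
  also have "\<dots> = C * C' * (NN t s)\<^sup>2" by (simp add: power2_eq_square algebra_simps)
  also have "\<dots> \<le> C * C' * (2 * QQ t s)" using NN_QQ assms by (intro mult_left_mono) auto
  finally show ?thesis by simp
qed

lemma Du_fun: "Du t = (\<lambda>s. proj_ran K (u t s) - us0)" by (rule ext) (simp add: Du_def)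
lemma aa_fun: "aa t = (\<lambda>s. xh t s - xs)" by (rule ext) (simp add: aa_def)
lemma rr_fun: "rr t = (\<lambda>s. K (xh t s) - b)" by (rule ext) (simp add: rr_def)
lemma ee_fun: "ee t = (\<lambda>s. \<rho> t s - (K (xh t s) - b))" by (rule ext) (simp add: ee_def)
lemma gg_fun: "gg t = (\<lambda>s. 2 *\<^sub>R Du t s - (2 * \<tau>) *\<^sub>R rr t s + (2 * \<gamma> * \<tau>\<^sup>2) *\<^sub>R K (adjoint K (rr t s)) + (2 * kap) *\<^sub>R rr t s)"
  by (rule ext) (simp add: gg_def)
lemma BB_fun: "BB t = (\<lambda>s. (1 / \<gamma>) * (norm (aa t s))\<^sup>2 + ((1 + om) / \<tau>) * (norm (Du t s))\<^sup>2
    - \<gamma> * \<tau>\<^sup>2 * (norm (adjoint K (rr t s)))\<^sup>2 - kap * (norm (rr t s))\<^sup>2)"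
  by (rule ext) (simp add: BB_def)
lemma Psi_fun: "Psi t = (\<lambda>s. (1 / \<gamma>) * (norm (x t s - xs))\<^sup>2 + ((1 + om) / \<tau>) * (norm (proj_ran K (u t s) - us0))\<^sup>2)"
  by (rule ext) (simp add: Psi_def)
lemma QQ_fun: "QQ t = (\<lambda>s. (norm (x t s - xs))\<^sup>2 + (norm (Du t s))\<^sup>2)"
  by (rule ext) (simp add: QQ_def)

lemma meas_Du_M[measurable]: "Du t \<in> borel_measurable M" unfolding Du_fun by measurable
lemma meas_Du_F[measurable]: "Du t \<in> borel_measurable (F t)" unfolding Du_fun by measurable
lemma meas_aa_M[measurable]: "aa t \<in> borel_measurable M" unfolding aa_fun by measurable
lemma meas_rr_M[measurable]: "rr t \<in> borel_measurable M" unfolding rr_fun by measurable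
lemma meas_rr_F[measurable]: "rr t \<in> borel_measurable (F t)" unfolding rr_fun by measurable
lemma meas_ee_M[measurable]: "ee t \<in> borel_measurable M" unfolding ee_fun by measurable
lemma meas_gg_M[measurable]: "gg t \<in> borel_measurable M" unfolding gg_fun by measurable
lemma meas_gg_F[measurable]: "gg t \<in> borel_measurable (F t)" unfolding gg_fun by measurable
lemma meas_BB_M[measurable]: "BB t \<in> borel_measurable M" unfolding BB_fun by measurable
lemma meas_Psi_M[measurable]: "Psi t \<in> borel_measurable M" unfolding Psi_fun by measurable
lemma meas_QQ_M[measurable]: "QQ t \<in> borel_measurable M" unfolding QQ_fun by measurable

lemma int_le:
  fixes g h :: "'w \<Rightarrow> real"
  assumes "integrable M h" "g \<in> borel_measurable M" "\<And>s. \<bar>g s\<bar> \<le> h s"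
  shows "integrable M g"
proof (rule Bochner_Integration.integrable_bound[OF assms(1,2)])
  show "AE s in M. norm (g s) \<le> norm (h s)" using assms(3) by (auto intro: order_trans[OF _ abs_ge_self])
qed

lemma int_QQ: assumes "integrable M (Psi t)" shows "integrable M (QQ t)"
proof (rule int_le)
  show "integrable M (\<lambda>s. (\<gamma> + kap) * Psi t s)" using assms by simp
  show "\<bar>QQ t s\<bar> \<le> (\<gamma> + kap) * Psi t s" for s using QQ_Psi by (simp add: QQ_def)
qed simp

end

lemma ab_le: fixes a b :: real assumes "0 \<le> a" "0 \<le> b" shows "a * b \<le> a\<^sup>2 + b\<^sup>2"
proof -
  have "0 \<le> (a - b)\<^sup>2" by simp
  moreover have "(a - b)\<^sup>2 = a\<^sup>2 + b\<^sup>2 - 2 * (a * b)" by (simp add: power2_diff mult.assoc)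
  moreover have "0 \<le> a * b" using assms by simp
  ultimately show ?thesis by linarith
qed

lemma apb_sq: fixes a b :: real shows "(a + b)\<^sup>2 \<le> 2 * a\<^sup>2 + 2 * b\<^sup>2"
proof -
  have "0 \<le> (a - b)\<^sup>2" by simp
  moreover have "(a - b)\<^sup>2 = a\<^sup>2 + b\<^sup>2 - 2 * (a * b)" by (simp add: power2_diff mult.assoc)
  moreover have "(a + b)\<^sup>2 = a\<^sup>2 + b\<^sup>2 + 2 * (a * b)" by (simp add: power2_sum mult.assoc)
  ultimately show ?thesis by linarith
qed

context rp begin

lemma step_main:
  assumes intP: "integrable M (Psi t)"
  shows "integrable M (Psi (Suc t)) \<and> (\<integral>s. Psi (Suc t) s \<partial>M) \<le> cc * (\<integral>s. Psi t s \<partial>M)"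
proof -
  interpret prob_space M by (rule P)
  interpret S: sigma_finite_subalgebra M "F t" by (rule sfs)
  have intQ: "integrable M (QQ t)" by (rule int_QQ[OF intP])
  have byQ: "integrable M g" if "g \<in> borel_measurable M" "\<And>s. \<bar>g s\<bar> \<le> C * QQ t s" for g :: "'w \<Rightarrow> real" and C
    using int_le[of "\<lambda>s. C * QQ t s" g] intQ that by simp
  define fa where "fa = (\<lambda>s. (norm (aa t s))\<^sup>2)"
  define fD where "fD = (\<lambda>s. (norm (Du t s))\<^sup>2)"
  define fr where "fr = (\<lambda>s. (norm (rr t s))\<^sup>2)"
  define fAr where "fAr = (\<lambda>s. (norm (adjoint K (rr t s)))\<^sup>2)"
  define fe where "fe = (\<lambda>s. (norm (ee t s))\<^sup>2)"
  define fAe where "fAe = (\<lambda>s. (norm (adjoint K (ee t s)))\<^sup>2)"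
  define fg where "fg = (\<lambda>s. (norm (gg t s))\<^sup>2)"
  define fG where "fG = (\<lambda>s. gg t s \<bullet> \<rho> t s)"
  define fGr where "fGr = (\<lambda>s. gg t s \<bullet> rr t s)"
  have m[measurable]: "fa \<in> borel_measurable M" "fD \<in> borel_measurable M" "fr \<in> borel_measurable M"
    "fAr \<in> borel_measurable M" "fe \<in> borel_measurable M" "fAe \<in> borel_measurable M" "fg \<in> borel_measurable M"
    "fG \<in> borel_measurable M" "fGr \<in> borel_measurable M"
    unfolding fa_def fD_def fr_def fAr_def fe_def fAe_def fg_def fG_def fGr_def by measurable
  have int_fa: "integrable M fa"
    by (rule byQ[of _ "2 * Ca\<^sup>2"]) (auto simp: fa_def intro: sq_bound bound_a Ca_nn)
  have int_fD: "integrable M fD"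
    by (rule byQ[of _ 1]) (simp_all add: fD_def QQ_def)
  have int_fr: "integrable M fr"
    by (rule byQ[of _ "2 * (K0 * Ca)\<^sup>2"]) (auto simp: fr_def intro!: sq_bound bound_r mult_nonneg_nonneg K0_nn Ca_nn)
  have int_fAr: "integrable M fAr"
    by (rule byQ[of _ "2 * (K0 * (K0 * Ca))\<^sup>2"]) (auto simp: fAr_def intro!: sq_bound bound_Ar mult_nonneg_nonneg K0_nn Ca_nn)
  have int_fg: "integrable M fg"
    by (rule byQ[of _ "2 * Cg\<^sup>2"]) (auto simp: fg_def intro!: sq_bound bound_g Cg_nn)
  have int_fGr: "integrable M fGr"
    by (rule byQ[of _ "2 * Cg * (K0 * Ca)"]) (auto simp: fGr_def intro!: prod_bound bound_g bound_r Cg_nn mult_nonneg_nonneg K0_nn Ca_nn)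
  have BB_eq: "BB t = (\<lambda>s. (1 / \<gamma>) * fa s + ((1 + om) / \<tau>) * fD s - \<gamma> * \<tau>\<^sup>2 * fAr s - kap * fr s)"
    by (rule ext) (simp add: BB_def fa_def fD_def fAr_def fr_def)
  have int_BB: "integrable M (BB t)" unfolding BB_eq using int_fa int_fD int_fAr int_fr by simp

  have fe_nn: "\<And>s. fe s \<ge> 0" and fAe_nn: "\<And>s. fAe s \<ge> 0" and fr_nn: "\<And>s. fr s \<ge> 0" and fAr_nn: "\<And>s. fAr s \<ge> 0"
    by (simp_all add: fe_def fAe_def fr_def fAr_def)
  have nn_e: "(\<integral>\<^sup>+s. ennreal (fe s) \<partial>M) \<le> (\<integral>\<^sup>+s. ennreal (om * fr s) \<partial>M)"
  proof -
    have "(\<integral>\<^sup>+s. ennreal (fe s) \<partial>M) = (\<integral>\<^sup>+s. 1 * nn_cond_exp M (F t) (\<lambda>s. ennreal (fe s)) s \<partial>M)"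
      using S.nn_cond_exp_intg[of "\<lambda>_. 1" "\<lambda>s. ennreal (fe s)"] by simp
    also have "\<dots> \<le> (\<integral>\<^sup>+s. ennreal (om * fr s) \<partial>M)"
      using rho_var[of t] by (intro nn_integral_mono_AE) (auto simp: fe_def ee_def fr_def rr_def)
    finally show ?thesis .
  qed
  have int_omfr: "integrable M (\<lambda>s. om * fr s)" using int_fr by simp
  have eq_omfr: "(\<integral>\<^sup>+s. ennreal (om * fr s) \<partial>M) = ennreal (\<integral>s. om * fr s \<partial>M)"
    by (rule nn_integral_eq_integral[OF int_omfr]) (simp add: fr_nn om_nn)
  have int_fe: "integrable M fe"
  proof (rule integrableI_bounded)
    have "(\<integral>\<^sup>+s. ennreal (norm (fe s)) \<partial>M) = (\<integral>\<^sup>+s. ennreal (fe s) \<partial>M)" using fe_nn by simp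
    also have "\<dots> \<le> ennreal (\<integral>s. om * fr s \<partial>M)" using nn_e eq_omfr by simp
    also have "\<dots> < \<infinity>" by simp
    finally show "(\<integral>\<^sup>+s. ennreal (norm (fe s)) \<partial>M) < \<infinity>" .
  qed simp
  have le_fe: "(\<integral>s. fe s \<partial>M) \<le> om * (\<integral>s. fr s \<partial>M)"
  proof -
    have "ennreal (\<integral>s. fe s \<partial>M) = (\<integral>\<^sup>+s. ennreal (fe s) \<partial>M)"
      by (rule nn_integral_eq_integral[OF int_fe, symmetric]) (simp add: fe_nn)
    also have "\<dots> \<le> ennreal (\<integral>s. om * fr s \<partial>M)" using nn_e eq_omfr by simp
    finally have "(\<integral>s. fe s \<partial>M) \<le> (\<integral>s. om * fr s \<partial>M)"
      by (subst (asm) ennreal_le_iff) (auto intro!: integral_nonneg_AE simp: fr_nn om_nn)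
    then show ?thesis by simp
  qed
  have nn_Ae: "(\<integral>\<^sup>+s. ennreal (fAe s) \<partial>M) + (\<integral>\<^sup>+s. ennreal (\<zeta> * fAr s) \<partial>M) \<le> (\<integral>\<^sup>+s. ennreal (om_ran * fr s) \<partial>M)"
  proof -
    have "(\<integral>\<^sup>+s. ennreal (fAe s) \<partial>M) = (\<integral>\<^sup>+s. 1 * nn_cond_exp M (F t) (\<lambda>s. ennreal (fAe s)) s \<partial>M)"
      using S.nn_cond_exp_intg[of "\<lambda>_. 1" "\<lambda>s. ennreal (fAe s)"] by simp
    then have "(\<integral>\<^sup>+s. ennreal (fAe s) \<partial>M) + (\<integral>\<^sup>+s. ennreal (\<zeta> * fAr s) \<partial>M)
        = (\<integral>\<^sup>+s. nn_cond_exp M (F t) (\<lambda>s. ennreal (fAe s)) s + ennreal (\<zeta> * fAr s) \<partial>M)"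
      by (simp add: nn_integral_add)
    also have "\<dots> \<le> (\<integral>\<^sup>+s. ennreal (om_ran * fr s) \<partial>M)"
      using rho_var_ran[of t] by (intro nn_integral_mono_AE) (auto simp: fAe_def fAr_def ee_def fr_def rr_def)
    finally show ?thesis .
  qed
  have int_omrfr: "integrable M (\<lambda>s. om_ran * fr s)" using int_fr by simp
  have eq_omrfr: "(\<integral>\<^sup>+s. ennreal (om_ran * fr s) \<partial>M) = ennreal (\<integral>s. om_ran * fr s \<partial>M)"
    by (rule nn_integral_eq_integral[OF int_omrfr]) (simp add: fr_nn om_ran_nn)
  have int_zfAr: "integrable M (\<lambda>s. \<zeta> * fAr s)" using int_fAr by simp
  have eq_zfAr: "(\<integral>\<^sup>+s. ennreal (\<zeta> * fAr s) \<partial>M) = ennreal (\<integral>s. \<zeta> * fAr s \<partial>M)"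
    by (rule nn_integral_eq_integral[OF int_zfAr]) (simp add: fAr_nn zeta)
  have int_fAe: "integrable M fAe"
  proof (rule integrableI_bounded)
    have "(\<integral>\<^sup>+s. ennreal (norm (fAe s)) \<partial>M) = (\<integral>\<^sup>+s. ennreal (fAe s) \<partial>M)" using fAe_nn by simp
    also have "\<dots> \<le> (\<integral>\<^sup>+s. ennreal (fAe s) \<partial>M) + (\<integral>\<^sup>+s. ennreal (\<zeta> * fAr s) \<partial>M)" by simp
    also have "\<dots> \<le> ennreal (\<integral>s. om_ran * fr s \<partial>M)" using nn_Ae eq_omrfr by simp
    also have "\<dots> < \<infinity>" by simp
    finally show "(\<integral>\<^sup>+s. ennreal (norm (fAe s)) \<partial>M) < \<infinity>" .
  qed simp
  have le_fAe: "(\<integral>s. fAe s \<partial>M) + \<zeta> * (\<integral>s. fAr s \<partial>M) \<le> om_ran * (\<integral>s. fr s \<partial>M)"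
  proof -
    have eqAe: "(\<integral>\<^sup>+s. ennreal (fAe s) \<partial>M) = ennreal (\<integral>s. fAe s \<partial>M)"
      by (rule nn_integral_eq_integral[OF int_fAe]) (simp add: fAe_nn)
    have n1: "0 \<le> (\<integral>s. fAe s \<partial>M)" by (auto intro!: integral_nonneg_AE simp: fAe_nn)
    have n2: "0 \<le> (\<integral>s. \<zeta> * fAr s \<partial>M)" by (auto intro!: integral_nonneg_AE simp: fAr_nn zeta)
    have "ennreal ((\<integral>s. fAe s \<partial>M) + (\<integral>s. \<zeta> * fAr s \<partial>M)) \<le> ennreal (\<integral>s. om_ran * fr s \<partial>M)"
      using nn_Ae unfolding eqAe eq_zfAr eq_omrfr ennreal_plus[OF n1 n2] .
    then have "(\<integral>s. fAe s \<partial>M) + (\<integral>s. \<zeta> * fAr s \<partial>M) \<le> (\<integral>s. om_ran * fr s \<partial>M)"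
      by (subst (asm) ennreal_le_iff) (auto intro!: integral_nonneg_AE simp: fr_nn om_ran_nn)
    then show ?thesis by simp
  qed

  have sqb: "\<bar>(v \<bullet> i) * (i \<bullet> w)\<bar> \<le> (norm v)\<^sup>2 + (norm w)\<^sup>2" if i: "i \<in> (Basis :: 'u set)" for v w i :: 'u
  proof -
    have "\<bar>v \<bullet> i\<bar> \<le> norm v" using Basis_le_norm[OF i, of v] by simp
    moreover have "\<bar>i \<bullet> w\<bar> \<le> norm w" using Basis_le_norm[OF i, of w] by (simp add: inner_commute)
    ultimately have "\<bar>(v \<bullet> i) * (i \<bullet> w)\<bar> \<le> norm v * norm w" by (simp add: abs_mult mult_mono)
    also have "\<dots> \<le> (norm v)\<^sup>2 + (norm w)\<^sup>2"
      by (rule ab_le) auto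
    finally show ?thesis .
  qed
  have rho_sq: "(norm (\<rho> t s))\<^sup>2 \<le> 2 * fr s + 2 * fe s" for s
  proof -
    have "\<rho> t s = rr t s + ee t s" by (simp add: rr_def ee_def)
    then have "norm (\<rho> t s) \<le> norm (rr t s) + norm (ee t s)" by (metis norm_triangle_ineq)
    then have "(norm (\<rho> t s))\<^sup>2 \<le> (norm (rr t s) + norm (ee t s))\<^sup>2" by (intro power_mono) auto
    also have "\<dots> \<le> 2 * fr s + 2 * fe s"
      unfolding fr_def fe_def by (rule apb_sq)
    finally show ?thesis .
  qed
  have int_coord: "integrable M (\<lambda>s. (gg t s \<bullet> i) * (i \<bullet> \<rho> t s))" if i: "i \<in> Basis" for i
  proof (rule int_le)
    show "integrable M (\<lambda>s. fg s + (2 * fr s + 2 * fe s))" using int_fg int_fr int_fe by simp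
    show "\<bar>(gg t s \<bullet> i) * (i \<bullet> \<rho> t s)\<bar> \<le> fg s + (2 * fr s + 2 * fe s)" for s
      using sqb[OF i, of "gg t s" "\<rho> t s"] rho_sq[of s] by (simp add: fg_def)
  qed measurable
  have int_coord_r: "integrable M (\<lambda>s. (gg t s \<bullet> i) * (i \<bullet> rr t s))" if i: "i \<in> Basis" for i
  proof (rule int_le)
    show "integrable M (\<lambda>s. fg s + fr s)" using int_fg int_fr by simp
    show "\<bar>(gg t s \<bullet> i) * (i \<bullet> rr t s)\<bar> \<le> fg s + fr s" for s
      using sqb[OF i, of "gg t s" "rr t s"] by (simp add: fg_def fr_def)
  qed measurable
  have fG_sum: "fG = (\<lambda>s. \<Sum>i\<in>Basis. (gg t s \<bullet> i) * (i \<bullet> \<rho> t s))"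
  proof (rule ext)
    fix s show "fG s = (\<Sum>i\<in>Basis. (gg t s \<bullet> i) * (i \<bullet> \<rho> t s))"
      unfolding fG_def euclidean_inner[of "gg t s" "\<rho> t s"] by (rule sum.cong) (simp_all add: inner_commute)
  qed
  have fGr_sum: "fGr = (\<lambda>s. \<Sum>i\<in>Basis. (gg t s \<bullet> i) * (i \<bullet> rr t s))"
  proof (rule ext)
    fix s show "fGr s = (\<Sum>i\<in>Basis. (gg t s \<bullet> i) * (i \<bullet> rr t s))"
      unfolding fGr_def euclidean_inner[of "gg t s" "rr t s"] by (rule sum.cong) (simp_all add: inner_commute)
  qed
  have int_fG: "integrable M fG" unfolding fG_sum
    by (rule Bochner_Integration.integrable_sum[where f="\<lambda>i s. (gg t s \<bullet> i) * (i \<bullet> \<rho> t s)"], rule int_coord)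
  have coord_eq: "(\<integral>s. (gg t s \<bullet> i) * (i \<bullet> \<rho> t s) \<partial>M) = (\<integral>s. (gg t s \<bullet> i) * (i \<bullet> rr t s) \<partial>M)" if i: "i \<in> Basis" for i
  proof -
    have "(\<integral>s. (gg t s \<bullet> i) * (i \<bullet> \<rho> t s) \<partial>M) = (\<integral>s. (gg t s \<bullet> i) * real_cond_exp M (F t) (\<lambda>s. i \<bullet> \<rho> t s) s \<partial>M)"
      by (rule S.real_cond_exp_intg(2)[symmetric, OF int_coord[OF i]]) measurable
    also have "\<dots> = (\<integral>s. (gg t s \<bullet> i) * (i \<bullet> rr t s) \<partial>M)"
    proof (rule integral_cong_AE)
      show "AE s in M. (gg t s \<bullet> i) * real_cond_exp M (F t) (\<lambda>s. i \<bullet> \<rho> t s) s = (gg t s \<bullet> i) * (i \<bullet> rr t s)"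
        using rho_unbiased[of t i] by eventually_elim (simp add: rr_def)
    qed measurable
    finally show ?thesis .
  qed
  have eq_fG: "(\<integral>s. fG s \<partial>M) = (\<integral>s. fGr s \<partial>M)"
  proof -
    have "(\<integral>s. (\<Sum>i\<in>Basis. (gg t s \<bullet> i) * (i \<bullet> \<rho> t s)) \<partial>M) = (\<Sum>i\<in>Basis. (\<integral>s. (gg t s \<bullet> i) * (i \<bullet> \<rho> t s) \<partial>M))"
      by (rule Bochner_Integration.integral_sum[where f="\<lambda>i s. (gg t s \<bullet> i) * (i \<bullet> \<rho> t s)"], rule int_coord)
    also have "\<dots> = (\<Sum>i\<in>Basis. (\<integral>s. (gg t s \<bullet> i) * (i \<bullet> rr t s) \<partial>M))"
      by (rule sum.cong) (simp_all add: coord_eq)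
    also have "\<dots> = (\<integral>s. (\<Sum>i\<in>Basis. (gg t s \<bullet> i) * (i \<bullet> rr t s)) \<partial>M)"
      by (rule Bochner_Integration.integral_sum[where f="\<lambda>i s. (gg t s \<bullet> i) * (i \<bullet> rr t s)", symmetric], rule int_coord_r)
    finally show ?thesis by (simp only: fG_sum fGr_sum)
  qed

  define RHS where "RHS = (\<lambda>s. BB t s + fG s + \<gamma> * \<tau>\<^sup>2 * fAe s + kap * fe s)"
  have int_RHS: "integrable M RHS" unfolding RHS_def using int_BB int_fG int_fAe int_fe by simp
  have P1': "Psi (Suc t) s \<le> RHS s" for s using P1[of t s] by (simp add: RHS_def fG_def fAe_def fe_def)
  have int_next: "integrable M (Psi (Suc t))"
  proof (rule int_le[OF int_RHS])
    show "\<bar>Psi (Suc t) s\<bar> \<le> RHS s" for s using Psi_nn[of "Suc t" s] P1'[of s] by simp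
  qed measurable
  have I1: "(\<integral>s. Psi (Suc t) s \<partial>M) \<le> (\<integral>s. RHS s \<partial>M)"
    by (rule integral_mono[OF int_next int_RHS P1'])
  have I2: "(\<integral>s. RHS s \<partial>M) = (\<integral>s. BB t s \<partial>M) + (\<integral>s. fG s \<partial>M) + \<gamma> * \<tau>\<^sup>2 * (\<integral>s. fAe s \<partial>M) + kap * (\<integral>s. fe s \<partial>M)"
    unfolding RHS_def using int_BB int_fG int_fAe int_fe by simp
  define LHS2 where "LHS2 = (\<lambda>s. BB t s + fGr s + \<gamma> * \<tau>\<^sup>2 * (om_ran * fr s - \<zeta> * fAr s) + kap * (om * fr s))"
  have int_L2: "integrable M LHS2" unfolding LHS2_def using int_BB int_fGr int_fr int_fAr by simp
  have P2': "LHS2 s \<le> cc * Psi t s" for s using P2[of t s] by (simp add: LHS2_def fGr_def fr_def fAr_def)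
  have I3: "(\<integral>s. LHS2 s \<partial>M) \<le> cc * (\<integral>s. Psi t s \<partial>M)"
  proof -
    have "(\<integral>s. LHS2 s \<partial>M) \<le> (\<integral>s. cc * Psi t s \<partial>M)"
      by (rule integral_mono[OF int_L2 _ P2']) (use intP in simp)
    then show ?thesis by simp
  qed
  have I4: "(\<integral>s. LHS2 s \<partial>M) = (\<integral>s. BB t s \<partial>M) + (\<integral>s. fGr s \<partial>M) + \<gamma> * \<tau>\<^sup>2 * (om_ran * (\<integral>s. fr s \<partial>M) - \<zeta> * (\<integral>s. fAr s \<partial>M)) + kap * (om * (\<integral>s. fr s \<partial>M))"
    unfolding LHS2_def using int_BB int_fGr int_fr int_fAr by simp
  have c1: "\<gamma> * \<tau>\<^sup>2 * (\<integral>s. fAe s \<partial>M) \<le> \<gamma> * \<tau>\<^sup>2 * (om_ran * (\<integral>s. fr s \<partial>M) - \<zeta> * (\<integral>s. fAr s \<partial>M))"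
    using le_fAe gamma_pos by (intro mult_left_mono) auto
  have c2: "kap * (\<integral>s. fe s \<partial>M) \<le> kap * (om * (\<integral>s. fr s \<partial>M))"
    using le_fe kap_pos by (intro mult_left_mono) auto
  have "(\<integral>s. Psi (Suc t) s \<partial>M) \<le> cc * (\<integral>s. Psi t s \<partial>M)"
    using I1 I2 I3 I4 c1 c2 eq_fG by linarith
  then show ?thesis using int_next by simp
qed
end

context rp begin

definition "Psi0 = (1 / \<gamma>) * (norm (x0 - xs))\<^sup>2 + ((1 + om) / \<tau>) * (norm (proj_ran K u0 - us0))\<^sup>2"

lemma Psi0_nn: "Psi0 \<ge> 0" using gamma_pos tau_pos om1 by (simp add: Psi0_def)

lemma cc_nn: "cc \<ge> 0" unfolding cc_def by (rule order_trans[OF zero_le_power2 max.cobounded1])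

lemma cc_lt1: "cc < 1"
proof -
  have gL: "0 < \<gamma> * Lf" "\<gamma> * Lf < 2" using gamma_pos Lf_pos gamma_lt by (auto simp: field_simps)
  have gm: "0 < \<gamma> * muf" "\<gamma> * muf \<le> \<gamma> * Lf" using gamma_pos mu_pos mu_le_L' by auto
  have 1: "(1 - \<gamma> * muf)\<^sup>2 < 1" using gL gm by (simp add: abs_square_less_1)
  have 2: "(\<gamma> * Lf - 1)\<^sup>2 < 1" using gL by (simp add: abs_square_less_1)
  have 3: "1 - \<gamma> * \<tau> * lambda_min_pos K / (1 + om) < 1"
    using gamma_pos tau_pos lam(1) om1 by simp
  show ?thesis using 1 2 3 by (simp add: cc_def)
qed

lemma psi_bound: "integrable M (Psi t) \<and> (\<integral>s. Psi t s \<partial>M) \<le> cc ^ t * Psi0"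
proof (induction t)
  case 0
  interpret prob_space M by (rule P)
  have "Psi 0 = (\<lambda>s. Psi0)" by (rule ext) (simp add: Psi_def Psi0_def x_init u_init)
  then show ?case using prob_space.prob_space[OF P] by simp
next
  case (Suc t)
  then have i: "integrable M (Psi t)" and b: "(\<integral>s. Psi t s \<partial>M) \<le> cc ^ t * Psi0" by auto
  from step_main[OF i] have i2: "integrable M (Psi (Suc t))" and b2: "(\<integral>s. Psi (Suc t) s \<partial>M) \<le> cc * (\<integral>s. Psi t s \<partial>M)" by auto
  have "cc * (\<integral>s. Psi t s \<partial>M) \<le> cc * (cc ^ t * Psi0)" using b cc_nn by (intro mult_left_mono) auto
  then show ?case using i2 b2 by simp
qed

lemma nn_bound: "(\<integral>\<^sup>+s. ennreal (Psi t s) \<partial>M) \<le> ennreal (cc ^ t * Psi0)"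
proof -
  have "(\<integral>\<^sup>+s. ennreal (Psi t s) \<partial>M) = ennreal (\<integral>s. Psi t s \<partial>M)"
    using psi_bound[of t] Psi_nn by (intro nn_integral_eq_integral) auto
  then show ?thesis using psi_bound[of t] by (simp add: ennreal_leI)
qed

lemma ae_Psi: "AE s in M. (\<lambda>t. Psi t s) \<longlonglongrightarrow> 0"
proof -
  have summ: "summable (\<lambda>t. cc ^ t * Psi0)"
    using cc_nn cc_lt1 by (intro summable_mult2 summable_geometric) simp
  have "(\<integral>\<^sup>+s. (\<Sum>t. ennreal (Psi t s)) \<partial>M) = (\<Sum>t. (\<integral>\<^sup>+s. ennreal (Psi t s) \<partial>M))"
    by (rule nn_integral_suminf) measurable
  also have "\<dots> \<le> (\<Sum>t. ennreal (cc ^ t * Psi0))"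
    by (rule suminf_le[OF nn_bound summableI summableI])
  also have "\<dots> = ennreal (\<Sum>t. cc ^ t * Psi0)"
    using summ cc_nn Psi0_nn by (intro suminf_ennreal2) auto
  finally have le: "(\<integral>\<^sup>+s. (\<Sum>t. ennreal (Psi t s)) \<partial>M) \<le> ennreal (\<Sum>t. cc ^ t * Psi0)" .
  have fin: "(\<integral>\<^sup>+s. (\<Sum>t. ennreal (Psi t s)) \<partial>M) \<noteq> \<infinity>"
    using order_le_less_trans[OF le ennreal_less_top] by auto
  have "AE s in M. (\<Sum>t. ennreal (Psi t s)) \<noteq> \<infinity>"
    by (rule nn_integral_PInf_AE[OF _ fin]) measurable
  then show ?thesis
  proof (rule AE_mp, intro AE_I2 impI)
    fix s assume "(\<Sum>t. ennreal (Psi t s)) \<noteq> \<infinity>"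
    then have "summable (\<lambda>t. Psi t s)" using Psi_nn by (intro summable_suminf_not_top) auto
    then show "(\<lambda>t. Psi t s) \<longlonglongrightarrow> 0" by (rule summable_LIMSEQ_zero)
  qed
qed

lemma sq_to_0:
  fixes v :: "nat \<Rightarrow> 'a::real_normed_vector"
  assumes h: "h \<longlonglongrightarrow> 0" and le: "\<And>t. (norm (v t))\<^sup>2 \<le> C * h t"
  shows "(\<lambda>t. norm (v t)) \<longlonglongrightarrow> 0"
proof -
  have "(\<lambda>t. C * h t) \<longlonglongrightarrow> 0" using tendsto_mult_right_zero[OF h] by simp
  then have "(\<lambda>t. (norm (v t))\<^sup>2) \<longlonglongrightarrow> 0"
  proof (rule real_tendsto_sandwich[where f="\<lambda>_. 0" and h="\<lambda>t. C * h t", rotated 3])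
    show "eventually (\<lambda>t. 0 \<le> (norm (v t))\<^sup>2) sequentially" by simp
    show "eventually (\<lambda>t. (norm (v t))\<^sup>2 \<le> C * h t) sequentially" using le by simp
  qed simp
  then have "(\<lambda>t. sqrt ((norm (v t))\<^sup>2)) \<longlonglongrightarrow> sqrt 0" by (rule tendsto_real_sqrt)
  then show ?thesis by simp
qed

lemma conv_x: "(\<lambda>t. Psi t s) \<longlonglongrightarrow> 0 \<Longrightarrow> (\<lambda>t. norm (x t s - xs)) \<longlonglongrightarrow> 0"
proof (erule sq_to_0[where C=\<gamma>])
  fix t
  have "(norm (x t s - xs))\<^sup>2 = \<gamma> * ((1 / \<gamma>) * (norm (x t s - xs))\<^sup>2)" using gamma_pos by simp
  also have "\<dots> \<le> \<gamma> * Psi t s" using gamma_pos tau_pos om1 by (intro mult_left_mono) (auto simp: Psi_def)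
  finally show "(norm (x t s - xs))\<^sup>2 \<le> \<gamma> * Psi t s" .
qed

lemma conv_D: "(\<lambda>t. Psi t s) \<longlonglongrightarrow> 0 \<Longrightarrow> (\<lambda>t. norm (Du t s)) \<longlonglongrightarrow> 0"
proof (erule sq_to_0[where C=kap])
  fix t
  have "(norm (Du t s))\<^sup>2 = kap * (((1 + om) / \<tau>) * (norm (Du t s))\<^sup>2)" using om1 tau_pos by (simp add: kap_def)
  also have "\<dots> \<le> kap * Psi t s" using gamma_pos kap_pos by (intro mult_left_mono) (auto simp: Psi_def Du_def)
  finally show "(norm (Du t s))\<^sup>2 \<le> kap * Psi t s" .
qed

lemma conv_a: "(\<lambda>t. Psi t s) \<longlonglongrightarrow> 0 \<Longrightarrow> (\<lambda>t. norm (aa t s)) \<longlonglongrightarrow> 0"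
proof -
  assume h: "(\<lambda>t. Psi t s) \<longlonglongrightarrow> 0"
  have "(\<lambda>t. NN t s) \<longlonglongrightarrow> 0 + 0" unfolding NN_def by (intro tendsto_add conv_x conv_D h)
  then have "(\<lambda>t. Ca * NN t s) \<longlonglongrightarrow> 0" using tendsto_mult_right_zero by fastforce
  then show ?thesis
  proof (rule real_tendsto_sandwich[where f="\<lambda>_. 0" and h="\<lambda>t. Ca * NN t s", rotated 3])
    show "eventually (\<lambda>t. 0 \<le> norm (aa t s)) sequentially" by simp
    show "eventually (\<lambda>t. norm (aa t s) \<le> Ca * NN t s) sequentially" using bound_a by simp
  qed simp
qed

lemma final:
  "(let c = max ((1 - \<gamma> * muf)\<^sup>2) (max ((\<gamma> * Lf - 1)\<^sup>2)
                     (1 - \<gamma> * \<tau> * lambda_min_pos K / (1 + om)));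
              \<Psi> = (\<lambda>t s. (1 / \<gamma>) * (norm (x t s - xs))\<^sup>2
                     + ((1 + om) / \<tau>) * (norm (proj_ran K (u t s) - us0))\<^sup>2)
          in c < 1 \<and>
             (\<forall>t. (\<integral>\<^sup>+ s. ennreal (\<Psi> t s) \<partial>M)
                    \<le> ennreal (c ^ t * ((1 / \<gamma>) * (norm (x0 - xs))\<^sup>2
                          + ((1 + om) / \<tau>) * (norm (proj_ran K u0 - us0))\<^sup>2))))
         \<and> (AE s in M. (\<lambda>t. x t s) \<longlonglongrightarrow> xs)
         \<and> (AE s in M. (\<lambda>t. xh t s) \<longlonglongrightarrow> xs)
         \<and> (AE s in M. (\<lambda>t. proj_ran K (u t s)) \<longlonglongrightarrow> us0)"
proof -
  have P1: "(\<lambda>t s. (1 / \<gamma>) * (norm (x t s - xs))\<^sup>2 + ((1 + om) / \<tau>) * (norm (proj_ran K (u t s) - us0))\<^sup>2) = Psi"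
    by (intro ext) (simp add: Psi_def)
  have part1: "cc < 1 \<and> (\<forall>t. (\<integral>\<^sup>+ s. ennreal (Psi t s) \<partial>M) \<le> ennreal (cc ^ t * Psi0))"
    using cc_lt1 nn_bound by blast
  have A1: "AE s in M. (\<lambda>t. x t s) \<longlonglongrightarrow> xs"
    using ae_Psi
  proof (rule AE_mp, intro AE_I2 impI)
    fix s assume "(\<lambda>t. Psi t s) \<longlonglongrightarrow> 0"
    from conv_x[OF this] show "(\<lambda>t. x t s) \<longlonglongrightarrow> xs" by (simp add: tendsto_norm_zero_iff LIM_zero_iff)
  qed
  have A2: "AE s in M. (\<lambda>t. xh t s) \<longlonglongrightarrow> xs"
    using ae_Psi
  proof (rule AE_mp, intro AE_I2 impI)
    fix s assume "(\<lambda>t. Psi t s) \<longlonglongrightarrow> 0"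
    from conv_a[OF this] show "(\<lambda>t. xh t s) \<longlonglongrightarrow> xs" by (simp add: aa_def tendsto_norm_zero_iff LIM_zero_iff)
  qed
  have A3: "AE s in M. (\<lambda>t. proj_ran K (u t s)) \<longlonglongrightarrow> us0"
    using ae_Psi
  proof (rule AE_mp, intro AE_I2 impI)
    fix s assume "(\<lambda>t. Psi t s) \<longlonglongrightarrow> 0"
    from conv_D[OF this] show "(\<lambda>t. proj_ran K (u t s)) \<longlonglongrightarrow> us0" by (simp add: Du_def tendsto_norm_zero_iff LIM_zero_iff)
  qed
  show ?thesis unfolding Let_def P1 using part1 A1 A2 A3 by (simp add: cc_def Psi0_def)
qed

end

theorem theorem4:
  fixes K :: "'x::euclidean_space \<Rightarrow> 'u::euclidean_space"
    and b :: 'u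
    and f :: "'x \<Rightarrow> real" and gf :: "'x \<Rightarrow> 'x"
    and Lf muf :: real
    and M :: "'w measure"
    and x xh :: "nat \<Rightarrow> 'w \<Rightarrow> 'x"
    and u :: "nat \<Rightarrow> 'w \<Rightarrow> 'u"
    and \<rho> :: "nat \<Rightarrow> 'w \<Rightarrow> 'u"
    and x0 :: 'x and u0 :: 'u
    and \<gamma> \<tau> om om_ran \<zeta> :: real
    and xs :: 'x and us0 :: 'u
  assumes K_lin: "linear K" and K_nz: "K \<noteq> (\<lambda>_. 0)"
    and b_ran: "b \<in> range K"
    and f_grad: "\<And>y. (f has_derivative (\<lambda>h. gf y \<bullet> h)) (at y)"
    and f_convex: "convex_on UNIV f"
    and f_smooth: "\<And>y z. norm (gf y - gf z) \<le> Lf * norm (y - z)"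
    and f_strong: "convex_on UNIV (\<lambda>y. f y - muf / 2 * (norm y)\<^sup>2)"
    and mu_pos: "muf > 0"
    and gamma_pos: "\<gamma> > 0" and gamma_lt: "\<gamma> < 2 / Lf"
    and tau_pos: "\<tau> > 0"
    and om_nn: "om \<ge> 0" and om_ran_nn: "om_ran \<ge> 0"
    and zeta: "0 \<le> \<zeta>" "\<zeta> \<le> 1"
    and step: "\<gamma> * \<tau> * ((1 - \<zeta>) * (onorm K)\<^sup>2 + om_ran) \<le> 1"
    and P: "prob_space M"
    and x_init: "\<And>s. x 0 s = x0"
    and u_init: "\<And>s. u 0 s = u0"
    and xh_def: "\<And>t s. xh t s = x t s - \<gamma> *\<^sub>R gf (x t s) - \<gamma> *\<^sub>R adjoint K (u t s)"
    and u_step: "\<And>t s. u (Suc t) s = u t s + (\<tau> / (1 + om)) *\<^sub>R \<rho> t s"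
    and x_step: "\<And>t s. x (Suc t) s = xh t s
                   - (\<gamma> * (1 + om)) *\<^sub>R (adjoint K (u (Suc t) s) - adjoint K (u t s))"
    and rho_meas: "\<And>t. \<rho> t \<in> borel_measurable M"
    and rho_int: "\<And>t. integrable M (\<rho> t)"
    and rho_unbiased: "\<And>t a. AE s in M.
          real_cond_exp M (gen_filtr M x u t) (\<lambda>s. a \<bullet> \<rho> t s) s = a \<bullet> (K (xh t s) - b)"
    and rho_var: "\<And>t. AE s in M.
          nn_cond_exp M (gen_filtr M x u t)
             (\<lambda>s. ennreal ((norm (\<rho> t s - (K (xh t s) - b)))\<^sup>2)) s
          \<le> ennreal (om * (norm (K (xh t s) - b))\<^sup>2)"
    and rho_var_ran: "\<And>t. AE s in M.
          nn_cond_exp M (gen_filtr M x u t)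
             (\<lambda>s. ennreal ((norm (adjoint K (\<rho> t s - (K (xh t s) - b))))\<^sup>2)) s
          + ennreal (\<zeta> * (norm (adjoint K (K (xh t s) - b)))\<^sup>2)
          \<le> ennreal (om_ran * (norm (K (xh t s) - b))\<^sup>2)"
    and xs_feas: "K xs = b"
    and xs_opt: "\<And>y. K y = b \<Longrightarrow> f xs \<le> f y"
    and us0_ran: "us0 \<in> range K"
    and us0_opt: "\<And>v. fconj f (- adjoint K us0) + us0 \<bullet> b \<le> fconj f (- adjoint K v) + v \<bullet> b"
  shows "(let c = max ((1 - \<gamma> * muf)\<^sup>2) (max ((\<gamma> * Lf - 1)\<^sup>2)
                     (1 - \<gamma> * \<tau> * lambda_min_pos K / (1 + om)));
              \<Psi> = (\<lambda>t s. (1 / \<gamma>) * (norm (x t s - xs))\<^sup>2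
                     + ((1 + om) / \<tau>) * (norm (proj_ran K (u t s) - us0))\<^sup>2)
          in c < 1 \<and>
             (\<forall>t. (\<integral>\<^sup>+ s. ennreal (\<Psi> t s) \<partial>M)
                    \<le> ennreal (c ^ t * ((1 / \<gamma>) * (norm (x0 - xs))\<^sup>2
                          + ((1 + om) / \<tau>) * (norm (proj_ran K u0 - us0))\<^sup>2))))
         \<and> (AE s in M. (\<lambda>t. x t s) \<longlonglongrightarrow> xs)
         \<and> (AE s in M. (\<lambda>t. xh t s) \<longlonglongrightarrow> xs)
         \<and> (AE s in M. (\<lambda>t. proj_ran K (u t s)) \<longlonglongrightarrow> us0)"
proof -
  have R: "rp K b f gf Lf muf M x xh u \<rho> x0 u0 \<gamma> \<tau> om om_ran \<zeta> xs us0"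
    by (rule rp.intro) (fact assms)+
  show ?thesis by (rule rp.final[OF R])
qed

end
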